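(* Fix $\alpha_0>d/2$ and let $C_0=K_0+K_1(\alpha_0)$. Let $Q\in\mathcal M^{\alpha_0}$ be invertible with $Q^{-1}\in\mathcal M^{\alpha_0}$, and assume $$C_0\|Q-I\|_{\alpha_0}\le\tfrac1{10},\qquad C_0\|Q^{-1}-I\|_{\alpha_0}\le\tfrac1{10}.$$ Then for any $P,P'\in\mathcal M^{\alpha_0}$, the equation $$\overline{Q^{-1}(X+P)Q+P'}=0$$ has a unique solution $X\in\mathcal M_0^\infty$, and it satisfies $$\|X\|_{\alpha_0}\le2\big(\|Q^{-1}PQ\|_{\alpha_0}+\|P'\|_{\alpha_0}\big).$$
   Context: Let $d\ge1$; $|\mathbf k|=\max_v|k_v|$, $\langle\mathbf k\rangle=\max\{1,|\mathbf k|\}$. $(\mathfrak B,\|\cdot\|_{\mathfrak B})$ is a Banach algebra of complex sequences indexed by $\mathbb Z^d$, pointwise operations, containing the constant sequence $1$ with norm $1$, translation invariant ($\|\sigma_{\mathbf j}a\|_{\mathfrak B}=\|a\|_{\mathfrak B}$, $(\sigma_{\mathbf j}a)_{\mathbf i}=a_{\mathbf i-\mathbf j}$). $\mathcal M$: matrices $A=(a_{\mathbf i,\mathbf j})$ with $\mathbf k$-diagonals $A_{\mathbf k}=(a_{\mathbf i,\mathbf i-\mathbf k})_{\mathbf i}\in\mathfrak B$; $\|A\|_s^2=\sum_{\mathbf k}\|A_{\mathbf k}\|_{\mathfrak B}^2\langle\mathbf k\rangle^{2s}$; $\mathcal M^s=\{A:\|A\|_s<\infty\}$; $\mathcal M^\infty=\bigcap_s\mathcal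 M^s$; $\mathcal M_0^\infty$ is the set of diagonal matrices in $\mathcal M^\infty$. For $A=(a_{\mathbf i,\mathbf j})$, $\overline A=\mathrm{diag}_{\mathbf i}(a_{\mathbf i,\mathbf i})$ is its main diagonal part. $I$ is the identity; products are matrix products. $K_0=\sqrt{20\sum_{\mathbf k}\langle\mathbf k\rangle^{-2\alpha_0}}$, $K_1(s)=(1-10^{-1/(2s)})^{-s}\sqrt{2\sum_{\mathbf k}\langle\mathbf k\rangle^{-2\alpha_0}}$. *)

theory Defs
  imports "HOL-Analysis.Analysis"
begin

text \<open>Indices are elements of Z^d, rendered as int^'d with 'd a finite type, d = CARD('d).
Sequences are functions (int^'d) => complex; matrices are functions (int^'d) => (int^'d) => complex.\<close>

type_synonym ('d) seq = "(int^'d) \<Rightarrow> complex"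
type_synonym ('d) mat = "(int^'d) \<Rightarrow> (int^'d) \<Rightarrow> complex"

definition supnorm_idx :: "int^('d::finite) \<Rightarrow> real" where
  "supnorm_idx k = Max (range (\<lambda>v. real_of_int \<bar>k $ v\<bar>))"

definition bracket :: "int^('d::finite) \<Rightarrow> real" where
  "bracket k = max 1 (supnorm_idx k)"

definition shift_seq :: "int^'d \<Rightarrow> ('d::finite) seq \<Rightarrow> 'd seq" where
  "shift_seq j a = (\<lambda>i. a (i - j))"

definition seq_banach_algebra :: "('d::finite) seq set \<Rightarrow> ('d seq \<Rightarrow> real) \<Rightarrow> bool" where
  "seq_banach_algebra B nB \<longleftrightarrow>
     (\<lambda>_. 0) \<in> B \<and> (\<lambda>_. 1) \<in> B \<and> nB (\<lambda>_. 1) = 1 \<and>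
     (\<forall>a\<in>B. \<forall>b\<in>B. (\<lambda>i. a i + b i) \<in> B \<and> (\<lambda>i. a i * b i) \<in> B) \<and>
     (\<forall>c. \<forall>a\<in>B. (\<lambda>i. c * a i) \<in> B) \<and>
     (\<forall>a\<in>B. nB a \<ge> 0 \<and> (nB a = 0 \<longleftrightarrow> a = (\<lambda>_. 0))) \<and>
     (\<forall>a\<in>B. \<forall>b\<in>B. nB (\<lambda>i. a i + b i) \<le> nB a + nB b) \<and>
     (\<forall>c. \<forall>a\<in>B. nB (\<lambda>i. c * a i) = cmod c * nB a) \<and>
     (\<forall>a\<in>B. \<forall>b\<in>B. nB (\<lambda>i. a i * b i) \<le> nB a * nB b) \<and>
     (\<forall>j. \<forall>a\<in>B. shift_seq j a \<in> B \<and> nB (shift_seq j a) = nB a) \<and>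
     (\<forall>f :: nat \<Rightarrow> 'd seq. (\<forall>n. f n \<in> B) \<longrightarrow>
        (\<forall>e>0. \<exists>N. \<forall>m\<ge>N. \<forall>n\<ge>N. nB (\<lambda>i. f m i - f n i) < e) \<longrightarrow>
        (\<exists>a\<in>B. (\<lambda>n. nB (\<lambda>i. f n i - a i)) \<longlonglongrightarrow> 0))"

definition diag_k :: "'d mat \<Rightarrow> int^'d \<Rightarrow> ('d::finite) seq" where
  "diag_k A k = (\<lambda>i. A i (i - k))"

definition in_M :: "('d::finite) seq set \<Rightarrow> 'd mat \<Rightarrow> bool" where
  "in_M B A \<longleftrightarrow> (\<forall>k. diag_k A k \<in> B)"

definition sq_terms :: "(('d::finite) seq \<Rightarrow> real) \<Rightarrow> real \<Rightarrow> 'd mat \<Rightarrow> int^'d \<Rightarrow> real" where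
  "sq_terms nB s A k = (nB (diag_k A k))\<^sup>2 * bracket k powr (2 * s)"

definition mnorm :: "(('d::finite) seq \<Rightarrow> real) \<Rightarrow> real \<Rightarrow> 'd mat \<Rightarrow> real" where
  "mnorm nB s A = sqrt (\<Sum>\<^sub>\<infinity>k. sq_terms nB s A k)"

definition M_s :: "('d::finite) seq set \<Rightarrow> ('d seq \<Rightarrow> real) \<Rightarrow> real \<Rightarrow> 'd mat set" where
  "M_s B nB s = {A. in_M B A \<and> sq_terms nB s A summable_on UNIV}"

definition M_inf :: "('d::finite) seq set \<Rightarrow> ('d seq \<Rightarrow> real) \<Rightarrow> 'd mat set" where
  "M_inf B nB = (\<Inter>s. M_s B nB s)"

definition M0_inf :: "('d::finite) seq set \<Rightarrow> ('d seq \<Rightarrow> real) \<Rightarrow> 'd mat set" where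
  "M0_inf B nB = {A \<in> M_inf B nB. \<forall>i j. i \<noteq> j \<longrightarrow> A i j = 0}"

definition mat_mult :: "('d::finite) mat \<Rightarrow> 'd mat \<Rightarrow> 'd mat" where
  "mat_mult A C = (\<lambda>i j. \<Sum>\<^sub>\<infinity>l. A i l * C l j)"

definition mat_add :: "('d::finite) mat \<Rightarrow> 'd mat \<Rightarrow> 'd mat" where
  "mat_add A C = (\<lambda>i j. A i j + C i j)"

definition mat_sub :: "('d::finite) mat \<Rightarrow> 'd mat \<Rightarrow> 'd mat" where
  "mat_sub A C = (\<lambda>i j. A i j - C i j)"

definition mat_id :: "('d::finite) mat" where
  "mat_id = (\<lambda>i j. if i = j then 1 else 0)"

definition main_diag :: "('d::finite) mat \<Rightarrow> 'd mat" where
  "main_diag A = (\<lambda>i j. if i = j then A i i else 0)"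

definition K0 :: "real \<Rightarrow> ('d::finite) itself \<Rightarrow> real" where
  "K0 a0 _ = sqrt (20 * (\<Sum>\<^sub>\<infinity>k::int^'d. bracket k powr (-2 * a0)))"

definition K1 :: "real \<Rightarrow> real \<Rightarrow> ('d::finite) itself \<Rightarrow> real" where
  "K1 a0 s _ = (1 - 10 powr (-1 / (2 * s))) powr (-s)
                * sqrt (2 * (\<Sum>\<^sub>\<infinity>k::int^'d. bracket k powr (-2 * a0)))"

end

theory Submission
  imports Defs
begin

locale sba =
  fixes B :: "('d::finite) seq set" and nB :: "'d seq \<Rightarrow> real"
  assumes BA: "seq_banach_algebra B nB"
begin

lemma zero_in: "(\<lambda>_. 0) \<in> B" using BA unfolding seq_banach_algebra_def by blast
lemma one_in: "(\<lambda>_. 1) \<in> B" using BA unfolding seq_banach_algebra_def by blast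
lemma nB_one: "nB (\<lambda>_. 1) = 1" using BA unfolding seq_banach_algebra_def by blast
lemma add_in: "a \<in> B \<Longrightarrow> b \<in> B \<Longrightarrow> (\<lambda>i. a i + b i) \<in> B"
  using BA unfolding seq_banach_algebra_def by blast
lemma mult_in: "a \<in> B \<Longrightarrow> b \<in> B \<Longrightarrow> (\<lambda>i. a i * b i) \<in> B"
  using BA unfolding seq_banach_algebra_def by blast
lemma scale_in: "a \<in> B \<Longrightarrow> (\<lambda>i. c * a i) \<in> B"
  using BA unfolding seq_banach_algebra_def by blast
lemma nB_nonneg: "a \<in> B \<Longrightarrow> nB a \<ge> 0"
  using BA unfolding seq_banach_algebra_def by blast
lemma nB_eq0: "a \<in> B \<Longrightarrow> nB a = 0 \<longleftrightarrow> a = (\<lambda>_. 0)"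
  using BA unfolding seq_banach_algebra_def by blast
lemma nB_add: "a \<in> B \<Longrightarrow> b \<in> B \<Longrightarrow> nB (\<lambda>i. a i + b i) \<le> nB a + nB b"
  using BA unfolding seq_banach_algebra_def by blast
lemma nB_scale: "a \<in> B \<Longrightarrow> nB (\<lambda>i. c * a i) = cmod c * nB a"
  using BA unfolding seq_banach_algebra_def by blast
lemma nB_mult: "a \<in> B \<Longrightarrow> b \<in> B \<Longrightarrow> nB (\<lambda>i. a i * b i) \<le> nB a * nB b"
  using BA unfolding seq_banach_algebra_def by blast
lemma shift_in: "a \<in> B \<Longrightarrow> shift_seq j a \<in> B"
  using BA unfolding seq_banach_algebra_def by blast
lemma nB_shift: "a \<in> B \<Longrightarrow> nB (shift_seq j a) = nB a"
  using BA unfolding seq_banach_algebra_def by blast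
lemma complete:
  assumes "\<And>n. f n \<in> B" "\<And>e. e>0 \<Longrightarrow> \<exists>N. \<forall>m\<ge>N. \<forall>n\<ge>N. nB (\<lambda>i. f m i - f n i) < e"
  shows "\<exists>a\<in>B. (\<lambda>n. nB (\<lambda>i. f n i - a i)) \<longlonglongrightarrow> 0"
  using BA assms unfolding seq_banach_algebra_def by blast

lemma nB_zero: "nB (\<lambda>_. 0) = 0" using nB_eq0[OF zero_in] by simp

lemma neg_in: "a \<in> B \<Longrightarrow> (\<lambda>i. - a i) \<in> B"
  using scale_in[of a "-1"] by simp
lemma nB_neg: "a \<in> B \<Longrightarrow> nB (\<lambda>i. - a i) = nB a"
  using nB_scale[of a "-1"] by simp
lemma diff_in: "a \<in> B \<Longrightarrow> b \<in> B \<Longrightarrow> (\<lambda>i. a i - b i) \<in> B"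
  using add_in[of a "\<lambda>i. - b i"] neg_in[of b] by simp
lemma nB_diff: "a \<in> B \<Longrightarrow> b \<in> B \<Longrightarrow> nB (\<lambda>i. a i - b i) \<le> nB a + nB b"
  using nB_add[of a "\<lambda>i. - b i"] neg_in[of b] nB_neg[of b] by simp
lemma nB_diff_commute: "a \<in> B \<Longrightarrow> b \<in> B \<Longrightarrow> nB (\<lambda>i. a i - b i) = nB (\<lambda>i. b i - a i)"
  using nB_neg[of "\<lambda>i. b i - a i"] diff_in[of b a] by simp
lemma nB_tri: "a \<in> B \<Longrightarrow> b \<in> B \<Longrightarrow> c \<in> B \<Longrightarrow>
   nB (\<lambda>i. a i - c i) \<le> nB (\<lambda>i. a i - b i) + nB (\<lambda>i. b i - c i)"
  using nB_add[of "\<lambda>i. a i - b i" "\<lambda>i. b i - c i"] diff_in by simp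
lemma const_in: "(\<lambda>_. c) \<in> B"
  using scale_in[OF one_in, of c] by simp
lemma nB_const: "nB (\<lambda>_. c) = cmod c"
  using nB_scale[OF one_in, of c] nB_one by simp

lemma sum_in:
  assumes "finite F" "\<And>j. j \<in> F \<Longrightarrow> f j \<in> B"
  shows "(\<lambda>i. \<Sum>j\<in>F. f j i) \<in> B \<and> nB (\<lambda>i. \<Sum>j\<in>F. f j i) \<le> (\<Sum>j\<in>F. nB (f j))"
  using assms
proof (induction F rule: finite_induct)
  case empty
  then show ?case using zero_in nB_zero by simp
next
  case (insert x F)
  have fx: "f x \<in> B" using insert by simp
  have IH: "(\<lambda>i. \<Sum>j\<in>F. f j i) \<in> B" "nB (\<lambda>i. \<Sum>j\<in>F. f j i) \<le> (\<Sum>j\<in>F. nB (f j))"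
    using insert by auto
  have eq: "(\<lambda>i. \<Sum>j\<in>insert x F. f j i) = (\<lambda>i. f x i + (\<Sum>j\<in>F. f j i))"
    using insert by simp
  show ?case unfolding eq
    using add_in[OF fx IH(1)] nB_add[OF fx IH(1)] IH(2) insert by simp
qed

lemma geom_cauchy:
  assumes fB: "\<And>n. f n \<in> B" and r: "0 \<le> r" "r < 1" and C: "0 \<le> C"
    and step: "\<And>n. nB (\<lambda>i. f (Suc n) i - f n i) \<le> C * r ^ n"
  shows "\<exists>a\<in>B. (\<lambda>n. nB (\<lambda>i. f n i - a i)) \<longlonglongrightarrow> 0"
proof (rule complete[OF fB])
  have key: "nB (\<lambda>i. f (n + k) i - f n i) \<le> C * (r ^ n - r ^ (n + k)) / (1 - r)" for n k
  proof (induction k)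
    case 0
    then show ?case using nB_zero by simp
  next
    case (Suc k)
    have "nB (\<lambda>i. f (n + Suc k) i - f n i)
       \<le> nB (\<lambda>i. f (Suc (n + k)) i - f (n + k) i) + nB (\<lambda>i. f (n + k) i - f n i)"
      using nB_tri[OF fB fB fB] by simp
    also have "\<dots> \<le> C * r ^ (n + k) + C * (r ^ n - r ^ (n + k)) / (1 - r)"
      using step Suc by (intro add_mono) auto
    also have "\<dots> = C * (r ^ n - r ^ (n + Suc k)) / (1 - r)"
      using r by (simp add: field_simps)
    finally show ?case .
  qed
  have key2: "nB (\<lambda>i. f m i - f n i) \<le> C * r ^ n / (1 - r)" if "n \<le> m" for m n
  proof -
    obtain k where m: "m = n + k" using \<open>n \<le> m\<close> le_Suc_ex by blast
    have "C * (r ^ n - r ^ (n + k)) / (1 - r) \<le> C * r ^ n / (1 - r)"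
      using r C by (intro divide_right_mono mult_left_mono) auto
    then show ?thesis using key[of n k] m by simp
  qed
  fix e :: real assume e: "e > 0"
  have "(\<lambda>n. C * r ^ n / (1 - r)) \<longlonglongrightarrow> C * 0 / (1 - r)"
    using r by (intro tendsto_intros LIMSEQ_power_zero) auto
  then have "\<forall>\<^sub>F n in sequentially. C * r ^ n / (1 - r) < e"
    using e by (simp add: order_tendstoD(2))
  then obtain N where N: "\<And>n. n \<ge> N \<Longrightarrow> C * r ^ n / (1 - r) < e"
    by (auto simp: eventually_sequentially)
  have mono: "C * r ^ n / (1 - r) \<le> C * r ^ N / (1 - r)" if "n \<ge> N" for n
    using r C that by (intro divide_right_mono mult_left_mono power_decreasing) auto
  show "\<exists>N. \<forall>m\<ge>N. \<forall>n\<ge>N. nB (\<lambda>i. f m i - f n i) < e"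
  proof (intro exI allI impI)
    fix m n assume mn: "m \<ge> N" "n \<ge> N"
    show "nB (\<lambda>i. f m i - f n i) < e"
    proof (cases "n \<le> m")
      case True
      then show ?thesis using key2[OF True] mono[OF mn(2)] N[of N] by simp
    next
      case False
      then show ?thesis using key2[of m n] mono[OF mn(1)] N[of N] nB_diff_commute[OF fB fB, of m n]
        by simp
    qed
  qed
qed

end

context sba begin

lemma eval_bound:
  assumes aB: "a \<in> B"
  shows "cmod (a i) \<le> nB a"
proof (rule ccontr)
  assume "\<not> cmod (a i) \<le> nB a"
  then have lt: "nB a < cmod (a i)" by simp
  have nn: "nB a \<ge> 0" using nB_nonneg[OF aB] .
  then have ai0: "a i \<noteq> 0" using lt by auto
  define b where "b = (\<lambda>k. inverse (a i) * a k)"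
  have bB: "b \<in> B" unfolding b_def using scale_in[OF aB] .
  define r where "r = nB b"
  have r_eq: "r = nB a / cmod (a i)"
    unfolding r_def b_def using nB_scale[OF aB, of "inverse (a i)"] by (simp add: norm_inverse divide_inverse mult.commute)
  have r0: "0 \<le> r" "r < 1" using nn lt ai0 unfolding r_eq by (auto simp: field_simps)
  have bi: "b i = 1" unfolding b_def using ai0 by simp
  define p where "p n = (\<lambda>k. b k ^ n)" for n
  have pB: "p n \<in> B \<and> nB (p n) \<le> r ^ n" for n
  proof (induction n)
    case 0
    then show ?case unfolding p_def using one_in nB_one by simp
  next
    case (Suc n)
    have eq: "p (Suc n) = (\<lambda>k. b k * p n k)" unfolding p_def by simp
    show ?case unfolding eq using mult_in[OF bB] nB_mult[OF bB, of "p n"] Suc r0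
      by (auto simp: r_def intro: order.trans mult_left_mono)
  qed
  define s where "s n = (\<lambda>k. \<Sum>m<n. b k ^ m)" for n
  have sB: "s n \<in> B" for n
    unfolding s_def using sum_in[of "{..<n}" p] pB unfolding p_def by auto
  have sstep: "nB (\<lambda>k. s (Suc n) k - s n k) \<le> 1 * r ^ n" for n
    unfolding s_def using pB[of n] unfolding p_def by simp
  obtain c where cB: "c \<in> B" and lim: "(\<lambda>n. nB (\<lambda>k. s n k - c k)) \<longlonglongrightarrow> 0"
    using geom_cauchy[where f=s and r=r and C=1, OF sB r0] sstep by auto
  define one_b where "one_b = (\<lambda>k. 1 - b k)"
  have obB: "one_b \<in> B" unfolding one_b_def using diff_in[OF one_in bB] .
  define z where "z = (\<lambda>k. one_b k * c k - 1)"
  have zB: "z \<in> B" unfolding z_def using diff_in[OF mult_in[OF obB cB] one_in] .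
  have zbound: "nB z \<le> nB one_b * nB (\<lambda>k. s n k - c k) + r ^ n" for n
  proof -
    have geo: "one_b k * s n k = 1 - p n k" for k
      unfolding one_b_def s_def p_def by (simp add: one_diff_power_eq)
    have zeq: "z = (\<lambda>k. (- one_b k * (s n k - c k)) + (- p n k))"
      unfolding z_def using geo by (auto simp: algebra_simps)
    have d1: "(\<lambda>k. s n k - c k) \<in> B" using diff_in[OF sB cB] .
    have m1: "(\<lambda>k. - one_b k * (s n k - c k)) \<in> B"
      using neg_in[OF mult_in[OF obB d1]] by simp
    have "nB z \<le> nB (\<lambda>k. - one_b k * (s n k - c k)) + nB (\<lambda>k. - p n k)"
      unfolding zeq using nB_add[OF m1 neg_in] pB by auto
    also have "nB (\<lambda>k. - one_b k * (s n k - c k)) = nB (\<lambda>k. one_b k * (s n k - c k))"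
      using nB_neg[OF mult_in[OF obB d1]] by simp
    also have "\<dots> \<le> nB one_b * nB (\<lambda>k. s n k - c k)" using nB_mult[OF obB d1] .
    also have "nB (\<lambda>k. - p n k) \<le> r ^ n" using nB_neg pB by simp
    finally show ?thesis by simp
  qed
  have "(\<lambda>n. nB one_b * nB (\<lambda>k. s n k - c k) + r ^ n) \<longlonglongrightarrow> nB one_b * 0 + 0"
    using r0 by (intro tendsto_intros lim LIMSEQ_power_zero) auto
  then have "nB z \<le> 0"
    using zbound by (intro LIMSEQ_le_const[OF _ exI[of _ 0]]) auto
  then have "nB z = 0" using nB_nonneg[OF zB] by simp
  then have "z = (\<lambda>_. 0)" using nB_eq0[OF zB] by simp
  then have "z i = 0" by simp
  then show False unfolding z_def one_b_def using bi by simp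
qed

lemma eval_diff_bound:
  "a \<in> B \<Longrightarrow> b \<in> B \<Longrightarrow> cmod (a i - b i) \<le> nB (\<lambda>k. a k - b k)"
  using eval_bound[OF diff_in] by blast

end

context sba begin

lemma pw_abs_summable:
  assumes fB: "\<And>j. f j \<in> B" and sm: "(\<lambda>j. nB (f j)) summable_on A"
  shows "(\<lambda>j. norm (f j i)) summable_on A"
  by (rule summable_on_comparison_test[OF sm]) (use eval_bound[OF fB] in auto)

lemma pw_summable:
  assumes fB: "\<And>j. f j \<in> B" and sm: "(\<lambda>j. nB (f j)) summable_on A"
  shows "(\<lambda>j. f j i) summable_on A"
  using abs_summable_summable[OF pw_abs_summable[OF assms]] .

lemma series_in:
  fixes f :: "'a \<Rightarrow> 'd seq"
  assumes fB: "\<And>j. f j \<in> B" and sm: "(\<lambda>j. nB (f j)) summable_on UNIV"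
  shows "(\<lambda>i. \<Sum>\<^sub>\<infinity>j. f j i) \<in> B \<and> nB (\<lambda>i. \<Sum>\<^sub>\<infinity>j. f j i) \<le> (\<Sum>\<^sub>\<infinity>j. nB (f j))"
proof -
  define h where "h j = nB (f j)" for j
  define S where "S = (\<Sum>\<^sub>\<infinity>j. h j)"
  have hnn: "h j \<ge> 0" for j unfolding h_def using nB_nonneg[OF fB] .
  have hs: "h summable_on UNIV" unfolding h_def using sm .
  have "\<forall>n. \<exists>F. finite F \<and> dist (sum h F) S \<le> (1/2::real)^n"
    using infsum_finite_approximation[OF hs] unfolding S_def by force
  then obtain F where F: "\<And>n. finite (F n)" "\<And>n. dist (sum h (F n)) S \<le> (1/2::real)^n"
    by metis
  define G where "G n = (\<Union>m\<le>n. F m)" for n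
  have Gfin: "finite (G n)" for n unfolding G_def using F(1) by auto
  have Gmono: "G n \<subseteq> G (Suc n)" for n unfolding G_def by (auto intro: le_SucI)
  have upH: "sum h H \<le> S" if "finite H" for H
    unfolding S_def by (rule finite_sum_le_infsum[OF hs that]) (auto simp: hnn)
  have lowG: "S - (1/2)^n \<le> sum h (G n)" for n
  proof -
    have "sum h (F n) \<le> sum h (G n)"
      by (rule sum_mono2[OF Gfin]) (auto simp: G_def hnn)
    moreover have "S - (1/2)^n \<le> sum h (F n)" using F(2)[of n] by (simp add: dist_real_def)
    ultimately show ?thesis by simp
  qed
  define s where "s n = (\<lambda>i. \<Sum>j\<in>G n. f j i)" for n
  have sB: "s n \<in> B" and snB: "nB (s n) \<le> sum h (G n)" for n
    unfolding s_def h_def using sum_in[of "G n" f] Gfin fB by auto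
  have step: "nB (\<lambda>i. s (Suc n) i - s n i) \<le> 1 * (1/2)^n" for n
  proof -
    have eq: "(\<lambda>i. s (Suc n) i - s n i) = (\<lambda>i. \<Sum>j\<in>G (Suc n) - G n. f j i)"
      unfolding s_def by (intro ext) (simp add: sum_diff[OF Gfin Gmono])
    have "nB (\<lambda>i. \<Sum>j\<in>G (Suc n) - G n. f j i) \<le> sum h (G (Suc n) - G n)"
      unfolding h_def using sum_in[of "G (Suc n) - G n" f] Gfin fB by auto
    also have "\<dots> = sum h (G (Suc n)) - sum h (G n)" using sum_diff[OF Gfin Gmono] .
    also have "\<dots> \<le> (1/2)^n" using upH[OF Gfin, of "Suc n"] lowG[of n] by simp
    finally show ?thesis unfolding eq by simp
  qed
  obtain g where gB: "g \<in> B" and lim: "(\<lambda>n. nB (\<lambda>i. s n i - g i)) \<longlonglongrightarrow> 0"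
    using geom_cauchy[where f=s and r="1/2" and C=1, OF sB] step by auto
  define T where "T i = (\<Sum>\<^sub>\<infinity>j. f j i)" for i
  have "g i = T i" for i
  proof -
    have l1: "(\<lambda>n. s n i) \<longlonglongrightarrow> g i"
    proof -
      have "(\<lambda>n. s n i - g i) \<longlonglongrightarrow> 0"
        by (rule Lim_null_comparison[OF _ lim]) (use eval_diff_bound[OF sB gB] in auto)
      then show ?thesis by (simp add: LIM_zero_iff)
    qed
    have l2: "(\<lambda>n. s n i) \<longlonglongrightarrow> T i"
    proof -
      have bnd: "norm (s n i - T i) \<le> (1/2)^n" for n
      proof -
        have ps: "(\<lambda>j. f j i) summable_on UNIV" using pw_summable[OF fB sm] .
        have pa: "(\<lambda>j. norm (f j i)) summable_on UNIV" using pw_abs_summable[OF fB sm] .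
        have split: "T i = (\<Sum>j\<in>G n. f j i) + (\<Sum>\<^sub>\<infinity>j\<in>UNIV - G n. f j i)"
        proof -
          have "T i = (\<Sum>\<^sub>\<infinity>j\<in>G n \<union> (UNIV - G n). f j i)" unfolding T_def by simp
          also have "\<dots> = (\<Sum>\<^sub>\<infinity>j\<in>G n. f j i) + (\<Sum>\<^sub>\<infinity>j\<in>UNIV - G n. f j i)"
            by (rule infsum_Un_disjoint) (auto intro: summable_on_subset_banach[OF ps] simp: Gfin)
          finally show ?thesis using Gfin by simp
        qed
        have splith: "S = sum h (G n) + (\<Sum>\<^sub>\<infinity>j\<in>UNIV - G n. h j)"
        proof -
          have "S = (\<Sum>\<^sub>\<infinity>j\<in>G n \<union> (UNIV - G n). h j)" unfolding S_def by simp
          also have "\<dots> = (\<Sum>\<^sub>\<infinity>j\<in>G n. h j) + (\<Sum>\<^sub>\<infinity>j\<in>UNIV - G n. h j)"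
            by (rule infsum_Un_disjoint) (auto intro: summable_on_subset[OF hs] simp: Gfin)
          finally show ?thesis using Gfin by simp
        qed
        have "norm (s n i - T i) = norm (\<Sum>\<^sub>\<infinity>j\<in>UNIV - G n. f j i)"
          unfolding split s_def by (simp add: norm_minus_commute)
        also have "\<dots> \<le> (\<Sum>\<^sub>\<infinity>j\<in>UNIV - G n. norm (f j i))"
          by (rule norm_infsum_bound) (rule summable_on_subset[OF pa], auto)
        also have "\<dots> \<le> (\<Sum>\<^sub>\<infinity>j\<in>UNIV - G n. h j)"
          by (rule infsum_mono) (auto intro: summable_on_subset[OF pa] summable_on_subset[OF hs]
              simp: eval_bound[OF fB], auto simp: h_def eval_bound[OF fB])
        also have "\<dots> = S - sum h (G n)" using splith by simp
        also have "\<dots> \<le> (1/2)^n" using lowG[of n] by simp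
        finally show ?thesis .
      qed
      have "(\<lambda>n. s n i - T i) \<longlonglongrightarrow> 0"
        by (rule Lim_null_comparison[OF _ LIMSEQ_power_zero[of "1/2::real"]]) (use bnd in auto)
      then show ?thesis by (simp add: LIM_zero_iff)
    qed
    show ?thesis using LIMSEQ_unique[OF l1 l2] .
  qed
  then have gT: "g = T" by auto
  have "nB g \<le> S"
  proof -
    have b: "nB g \<le> S + nB (\<lambda>i. s n i - g i)" for n
    proof -
      have "nB g \<le> nB (s n) + nB (\<lambda>i. g i - s n i)"
        using nB_add[OF sB diff_in[OF gB sB], of n n] by simp
      also have "nB (\<lambda>i. g i - s n i) = nB (\<lambda>i. s n i - g i)" using nB_diff_commute[OF gB sB] .
      finally show ?thesis using snB[of n] upH[OF Gfin, of n] by simp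
    qed
    have "(\<lambda>n. S + nB (\<lambda>i. s n i - g i)) \<longlonglongrightarrow> S + 0" by (intro tendsto_intros lim)
    then show ?thesis using b by (intro LIMSEQ_le_const[OF _ exI[of _ 0]]) auto
  qed
  then show ?thesis using gB unfolding gT T_def S_def h_def by simp
qed

end

lemma supnorm_ge: "real_of_int \<bar>k $ v\<bar> \<le> supnorm_idx k"
  unfolding supnorm_idx_def by (rule Max_ge) auto

lemma supnorm_le: "(\<And>v. real_of_int \<bar>k $ v\<bar> \<le> c) \<Longrightarrow> supnorm_idx k \<le> c"
  unfolding supnorm_idx_def by (subst Max_le_iff) auto

lemma supnorm_nonneg: "supnorm_idx k \<ge> 0"
  using supnorm_ge[of k] by (meson abs_ge_zero of_int_0_le_iff order_trans)

lemma bracket_ge1: "bracket k \<ge> 1" unfolding bracket_def by simp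
lemma bracket_pos: "bracket k > 0" using bracket_ge1[of k] by simp

lemma bracket_0: "bracket (0::int^'d::finite) = 1"
  unfolding bracket_def supnorm_idx_def by simp

lemma comp_le_bracket: "real_of_int \<bar>k $ v\<bar> \<le> bracket k"
  unfolding bracket_def using supnorm_ge[of k v] by simp

lemma supnorm_tri: "supnorm_idx (j + m) \<le> supnorm_idx j + supnorm_idx (m::int^'d::finite)"
proof (rule supnorm_le)
  fix v
  have "real_of_int \<bar>(j + m) $ v\<bar> \<le> real_of_int \<bar>j $ v\<bar> + real_of_int \<bar>m $ v\<bar>" by simp
  then show "real_of_int \<bar>(j + m) $ v\<bar> \<le> supnorm_idx j + supnorm_idx m"
    using supnorm_ge[of j v] supnorm_ge[of m v] by linarith
qed

lemma bracket_tri: "bracket (j + m) \<le> bracket j + bracket (m::int^'d::finite)"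
  unfolding bracket_def using supnorm_tri[of j m] supnorm_nonneg[of j] supnorm_nonneg[of m] by (auto simp: max_def)

lemma supnorm_uminus: "supnorm_idx (- k) = supnorm_idx (k::int^'d::finite)"
  unfolding supnorm_idx_def by simp

lemma bracket_uminus: "bracket (- k) = bracket (k::int^'d::finite)"
  unfolding bracket_def using supnorm_uminus[of k] by simp

lemma bracket_powr_tri:
  fixes j m :: "int^'d::finite" assumes s: "s \<ge> 0"
  shows "bracket (j + m) powr s \<le> 2 powr s * (bracket j powr s + bracket m powr s)"
proof -
  have "bracket (j + m) \<le> 2 * max (bracket j) (bracket m)" using bracket_tri[of j m] by simp
  then have "bracket (j + m) powr s \<le> (2 * max (bracket j) (bracket m)) powr s"
    using s less_imp_le[OF bracket_pos[of "j+m"]] by (intro powr_mono2) auto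
  also have "\<dots> = 2 powr s * max (bracket j) (bracket m) powr s"
    using bracket_pos by (simp add: powr_mult)
  also have "max (bracket j) (bracket m) powr s \<le> bracket j powr s + bracket m powr s"
    by (simp add: max_def)
  finally show ?thesis by simp
qed

definition hh :: "real \<Rightarrow> int \<Rightarrow> real" where
  "hh r n = max 1 (real_of_int \<bar>n\<bar>) powr (- r)"

lemma hh_summable:
  assumes r: "r > 1"
  shows "hh r summable_on UNIV"
proof -
  have "summable (\<lambda>n. real n powr (- r))" using r by (subst summable_real_powr_iff) simp
  then have s0: "(\<lambda>n::nat. real n powr (- r)) summable_on UNIV"
    by (subst summable_on_UNIV_nonneg_real_iff) auto
  have s1: "(\<lambda>n::nat. if n = 0 then 1 else 0 :: real) summable_on UNIV"
    by (rule finite_nonzero_values_imp_summable_on) (auto simp: Collect_conv_if)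
  have s2: "(\<lambda>n::nat. real n powr (- r) + (if n = 0 then 1 else 0)) summable_on UNIV"
    using summable_on_add[OF s0 s1] .
  have hn: "(\<lambda>n::nat. max 1 (real n) powr (- r)) summable_on UNIV"
    by (rule summable_on_comparison_test[OF s2]) (auto simp: max_def)
  have A: "hh r summable_on range int"
    by (subst summable_on_reindex) (auto simp: o_def hh_def intro: hn)
  have B: "hh r summable_on range (\<lambda>n. - int n)"
    by (subst summable_on_reindex) (auto simp: inj_on_def o_def hh_def intro: hn)
  have U: "(UNIV::int set) = range int \<union> range (\<lambda>n. - int n)"
  proof (rule set_eqI)
    fix x :: int
    show "x \<in> UNIV \<longleftrightarrow> x \<in> range int \<union> range (\<lambda>n. - int n)"
      by (cases "x \<ge> 0") (auto intro: image_eqI[of _ _ "nat x"] image_eqI[of _ _ "nat (-x)"])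
  qed
  show ?thesis unfolding U by (rule summable_on_union[OF A B])
qed

lemma hh_nonneg: "hh r n \<ge> 0" unfolding hh_def by simp

lemma weight_summable:
  assumes t: "t > real CARD('d::finite)"
  shows "(\<lambda>k::int^'d. bracket k powr (- t)) summable_on UNIV"
proof -
  define d where "d = real CARD('d)"
  have d0: "d > 0" unfolding d_def by simp
  define r where "r = t / d"
  have r1: "r > 1" unfolding r_def using t d0 by (simp add: d_def)
  define H where "H = (\<Sum>\<^sub>\<infinity>n. hh r n)"
  have hs: "hh r summable_on UNIV" using hh_summable[OF r1] .
  define g where "g k = (\<Prod>v\<in>UNIV. hh r (k $ v))" for k :: "int^'d"
  have le: "bracket k powr (- t) \<le> g k" for k
  proof -
    have "bracket k powr (- t) = (\<Prod>v\<in>(UNIV::'d set). bracket k powr (- r))"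
    proof -
      have "(\<Prod>v\<in>(UNIV::'d set). bracket k powr (- r)) = (bracket k powr (- r)) ^ CARD('d)"
        by simp
      also have "\<dots> = bracket k powr (real CARD('d) * (- r))"
        using bracket_pos[of k] by (subst powr_power) auto
      also have "real CARD('d) * (- r) = - t" unfolding r_def d_def by simp
      finally show ?thesis by simp
    qed
    also have "\<dots> \<le> g k" unfolding g_def hh_def
      using r1 comp_le_bracket[of k] bracket_pos bracket_ge1[of k]
      by (intro prod_mono conjI) (auto intro!: powr_mono2')
    finally show ?thesis .
  qed
  have gnn: "g k \<ge> 0" for k unfolding g_def by (simp add: prod_nonneg hh_nonneg)
  have gs: "g summable_on UNIV"
  proof (rule nonneg_bdd_above_summable_on)
    show "bdd_above (sum g ` {F. F \<subseteq> UNIV \<and> finite F})"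
    proof (rule bdd_aboveI2)
      fix F :: "(int^'d) set" assume "F \<in> {F. F \<subseteq> UNIV \<and> finite F}"
      then have fin: "finite F" by simp
      define N where "N = (\<Sum>k\<in>F. \<Sum>v\<in>UNIV. \<bar>k $ v\<bar>)"
      define box :: "(int^'d) set" where "box = (\<lambda>p. vec_lambda p) ` (PiE UNIV (\<lambda>_. {-N..N}))"
      have boxfin: "finite box" unfolding box_def by (intro finite_imageI finite_PiE) auto
      have Fsub: "F \<subseteq> box"
      proof
        fix k assume kF: "k \<in> F"
        have "\<bar>k $ v\<bar> \<le> N" for v
        proof -
          have "\<bar>k $ v\<bar> \<le> (\<Sum>v\<in>UNIV. \<bar>k $ v\<bar>)"
            by (rule member_le_sum) auto
          also have "\<dots> \<le> N" unfolding N_def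
            by (rule member_le_sum[OF kF _ fin]) (auto intro: sum_nonneg)
          finally show ?thesis .
        qed
        then have "(\<lambda>v. k $ v) \<in> PiE UNIV (\<lambda>_. {-N..N})" by (auto simp: abs_le_iff) (meson minus_le_iff)
        then show "k \<in> box" unfolding box_def by (intro image_eqI[of _ _ "\<lambda>v. k $ v"]) auto
      qed
      have inj: "inj_on (\<lambda>p. vec_lambda p :: int^'d) (PiE UNIV (\<lambda>_. {-N..N}))"
        by (rule inj_onI) (metis vec_lambda_inverse UNIV_I)
      have "sum g F \<le> sum g box" by (rule sum_mono2[OF boxfin Fsub]) (simp add: gnn)
      also have "sum g box = (\<Sum>p\<in>PiE (UNIV::'d set) (\<lambda>_. {-N..N}). \<Prod>v\<in>UNIV. hh r (p v))"
        unfolding box_def g_def by (subst sum.reindex[OF inj]) (auto intro!: sum.cong)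
      also have "\<dots> = (\<Prod>v\<in>(UNIV::'d set). \<Sum>n\<in>{-N..N}. hh r n)"
        by (subst prod_sum_PiE) auto
      also have "\<dots> \<le> (\<Prod>v\<in>(UNIV::'d set). H)"
        unfolding H_def
        by (intro prod_mono conjI sum_nonneg hh_nonneg finite_sum_le_infsum[OF hs]) auto
      finally show "sum g F \<le> H ^ CARD('d)" by simp
    qed
  qed (simp add: gnn)
  show ?thesis
    by (rule summable_on_comparison_test[OF gs]) (auto simp: le)
qed

lemma infsum_divide_const:
  fixes f :: "'a \<Rightarrow> real"
  shows "infsum (\<lambda>x. f x / c) A = infsum f A / c"
  by (simp add: divide_inverse infsum_cmult_left')

lemma amgm_summable:
  fixes f g :: "'a \<Rightarrow> real"
  assumes f: "(\<lambda>x. (f x)\<^sup>2) summable_on A" and g: "(\<lambda>x. (g x)\<^sup>2) summable_on A"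
  shows "(\<lambda>x. \<bar>f x * g x\<bar>) summable_on A"
proof (rule summable_on_comparison_test)
  show "(\<lambda>x. (f x)\<^sup>2 / 2 + (g x)\<^sup>2 / 2) summable_on A"
    using summable_on_add[OF summable_on_cmult_left[OF f] summable_on_cmult_left[OF g], of "1/2" "1/2"]
    by simp
  fix x
  have "2 * \<bar>f x\<bar> * \<bar>g x\<bar> \<le> (f x)\<^sup>2 + (g x)\<^sup>2"
    using sum_squares_bound[of "\<bar>f x\<bar>" "\<bar>g x\<bar>"] by (simp add: power2_abs)
  then show "\<bar>f x * g x\<bar> \<le> (f x)\<^sup>2 / 2 + (g x)\<^sup>2 / 2" by (simp add: abs_mult)
qed simp

lemma amgm_summable':
  fixes f g :: "'a \<Rightarrow> real"
  assumes f: "(\<lambda>x. (f x)\<^sup>2) summable_on A" and g: "(\<lambda>x. (g x)\<^sup>2) summable_on A"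
    and nn: "\<And>x. f x * g x \<ge> 0"
  shows "(\<lambda>x. f x * g x) summable_on A"
  using amgm_summable[OF f g] nn by simp

lemma amgm_infsum:
  fixes f g :: "'a \<Rightarrow> real"
  assumes f: "(\<lambda>x. (f x)\<^sup>2) summable_on A" and g: "(\<lambda>x. (g x)\<^sup>2) summable_on A"
  shows "(\<Sum>\<^sub>\<infinity>x\<in>A. f x * g x) \<le> (\<Sum>\<^sub>\<infinity>x\<in>A. (f x)\<^sup>2) / 2 + (\<Sum>\<^sub>\<infinity>x\<in>A. (g x)\<^sup>2) / 2"
proof -
  have s: "(\<lambda>x. f x * g x) summable_on A"
    using abs_summable_summable[of "\<lambda>x. f x * g x" A] amgm_summable[OF f g] by (simp add: abs_mult)
  have "(\<Sum>\<^sub>\<infinity>x\<in>A. f x * g x) \<le> (\<Sum>\<^sub>\<infinity>x\<in>A. (f x)\<^sup>2 / 2 + (g x)\<^sup>2 / 2)"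
  proof (rule infsum_mono[OF s])
    show "(\<lambda>x. (f x)\<^sup>2 / 2 + (g x)\<^sup>2 / 2) summable_on A"
      using summable_on_add[OF summable_on_cmult_left[OF f] summable_on_cmult_left[OF g], of "1/2" "1/2"]
      by simp
    fix x
    have "2 * (f x) * (g x) \<le> (f x)\<^sup>2 + (g x)\<^sup>2" using sum_squares_bound[of "f x" "g x"] by simp
    then show "f x * g x \<le> (f x)\<^sup>2 / 2 + (g x)\<^sup>2 / 2" by simp
  qed
  also have "\<dots> = (\<Sum>\<^sub>\<infinity>x\<in>A. (f x)\<^sup>2) / 2 + (\<Sum>\<^sub>\<infinity>x\<in>A. (g x)\<^sup>2) / 2"
    using infsum_add[OF summable_on_cmult_left[OF f] summable_on_cmult_left[OF g], of "1/2" "1/2"]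
    by (simp add: infsum_divide_const)
  finally show ?thesis .
qed

lemma infsum_CS:
  fixes f g :: "'a \<Rightarrow> real"
  assumes f: "(\<lambda>x. (f x)\<^sup>2) summable_on A" and g: "(\<lambda>x. (g x)\<^sup>2) summable_on A"
    and fnn: "\<And>x. f x \<ge> 0" and gnn: "\<And>x. g x \<ge> 0"
  shows "(\<Sum>\<^sub>\<infinity>x\<in>A. f x * g x)\<^sup>2 \<le> (\<Sum>\<^sub>\<infinity>x\<in>A. (f x)\<^sup>2) * (\<Sum>\<^sub>\<infinity>x\<in>A. (g x)\<^sup>2)"
proof -
  have s: "(\<lambda>x. f x * g x) summable_on A"
    using amgm_summable'[OF f g] fnn gnn by simp
  define F2 where "F2 = (\<Sum>\<^sub>\<infinity>x\<in>A. (f x)\<^sup>2)"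
  define G2 where "G2 = (\<Sum>\<^sub>\<infinity>x\<in>A. (g x)\<^sup>2)"
  have "(\<Sum>\<^sub>\<infinity>x\<in>A. f x * g x) \<le> sqrt (F2 * G2)"
  proof (rule infsum_le_finite_sums[OF s])
    fix S assume S: "finite S" "S \<subseteq> A"
    have "(\<Sum>x\<in>S. f x * g x)\<^sup>2 \<le> (\<Sum>x\<in>S. (f x)\<^sup>2) * (\<Sum>x\<in>S. (g x)\<^sup>2)"
      by (rule Cauchy_Schwarz_ineq_sum)
    also have "\<dots> \<le> F2 * G2" unfolding F2_def G2_def
      by (intro mult_mono finite_sum_le_infsum f g S sum_nonneg infsum_nonneg) auto
    finally have "(\<Sum>x\<in>S. f x * g x)\<^sup>2 \<le> F2 * G2" .
    then show "(\<Sum>x\<in>S. f x * g x) \<le> sqrt (F2 * G2)" by (simp add: real_le_rsqrt)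
  qed
  moreover have "0 \<le> (\<Sum>\<^sub>\<infinity>x\<in>A. f x * g x)" by (intro infsum_nonneg) (simp add: fnn gnn)
  moreover have "F2 * G2 \<ge> 0" unfolding F2_def G2_def by (intro mult_nonneg_nonneg infsum_nonneg) auto
  ultimately show ?thesis unfolding F2_def[symmetric] G2_def[symmetric]
    by (metis power_mono real_sqrt_pow2)
qed

lemma infsum_finite_sum_swap:
  fixes f :: "'b \<Rightarrow> 'a \<Rightarrow> real"
  assumes "finite F" "\<And>k. k \<in> F \<Longrightarrow> f k summable_on A"
  shows "(\<Sum>k\<in>F. \<Sum>\<^sub>\<infinity>x\<in>A. f k x) = (\<Sum>\<^sub>\<infinity>x\<in>A. \<Sum>k\<in>F. f k x)
     \<and> (\<lambda>x. \<Sum>k\<in>F. f k x) summable_on A"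
  using assms
proof (induction F rule: finite_induct)
  case empty then show ?case by simp
next
  case (insert y F)
  then have IH: "(\<Sum>k\<in>F. \<Sum>\<^sub>\<infinity>x\<in>A. f k x) = (\<Sum>\<^sub>\<infinity>x\<in>A. \<Sum>k\<in>F. f k x)"
     "(\<lambda>x. \<Sum>k\<in>F. f k x) summable_on A" and fy: "f y summable_on A" by auto
  show ?case using insert IH infsum_add[OF fy IH(2)] summable_on_add[OF fy IH(2)] by simp
qed

definition conv :: "(int^'d::finite \<Rightarrow> real) \<Rightarrow> (int^'d \<Rightarrow> real) \<Rightarrow> int^'d \<Rightarrow> real" where
  "conv a c k = (\<Sum>\<^sub>\<infinity>j. a j * c (k - j))"

lemma shift_summable:
  fixes v :: "int^'d::finite \<Rightarrow> real"
  shows "(\<lambda>j. v (k - j)) summable_on UNIV \<longleftrightarrow> v summable_on UNIV"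
  by (rule summable_on_reindex_bij_witness[where i="\<lambda>m. k - m" and j="\<lambda>m. k - m"]) auto

lemma shift_infsum:
  fixes v :: "int^'d::finite \<Rightarrow> real"
  shows "(\<Sum>\<^sub>\<infinity>j. v (k - j)) = (\<Sum>\<^sub>\<infinity>j. v j)"
  by (rule infsum_reindex_bij_witness[where i="\<lambda>m. k - m" and j="\<lambda>m. k - m"]) auto

lemma young:
  fixes u v :: "int^'d::finite \<Rightarrow> real"
  assumes unn: "\<And>j. u j \<ge> 0" and vnn: "\<And>j. v j \<ge> 0"
    and u2: "(\<lambda>j. (u j)\<^sup>2) summable_on UNIV" and v1: "v summable_on UNIV"
  shows "(\<lambda>k. (conv u v k)\<^sup>2) summable_on UNIV"
proof -
  define V where "V = (\<Sum>\<^sub>\<infinity>j. v j)"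
  define U where "U = (\<Sum>\<^sub>\<infinity>j. (u j)\<^sup>2)"
  have vleV: "v m \<le> V" for m
    using finite_sum_le_infsum[OF v1, of "{m}"] vnn unfolding V_def by simp
  have V0: "V \<ge> 0" unfolding V_def by (simp add: infsum_nonneg vnn)
  have hs: "(\<lambda>j. (u j)\<^sup>2 * v (k - j)) summable_on UNIV" for k
    by (rule summable_on_comparison_test[OF summable_on_cmult_right[OF u2, of V]])
       (use mult_left_mono[OF vleV zero_le_power2] in \<open>auto simp: mult.commute vnn\<close>)
  define H where "H k = (\<Sum>\<^sub>\<infinity>j. (u j)\<^sup>2 * v (k - j))" for k
  have conv_le: "(conv u v k)\<^sup>2 \<le> V * H k" for k
  proof -
    have "(conv u v k)\<^sup>2 = (\<Sum>\<^sub>\<infinity>j. (u j * sqrt (v (k - j))) * sqrt (v (k - j)))\<^sup>2"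
      unfolding conv_def by (simp add: vnn mult.assoc)
    also have "\<dots> \<le> (\<Sum>\<^sub>\<infinity>j. (u j * sqrt (v (k - j)))\<^sup>2) * (\<Sum>\<^sub>\<infinity>j. (sqrt (v (k - j)))\<^sup>2)"
    proof (rule infsum_CS)
      show "(\<lambda>x. (u x * sqrt (v (k - x)))\<^sup>2) summable_on UNIV"
        using hs[of k] by (simp add: power_mult_distrib vnn)
      show "(\<lambda>x. (sqrt (v (k - x)))\<^sup>2) summable_on UNIV"
        using v1 shift_summable[of v k] by (simp add: vnn)
    qed (auto simp: unn vnn)
    also have "\<dots> = H k * V"
      unfolding H_def V_def using shift_infsum[of v k] by (simp add: power_mult_distrib vnn)
    finally show ?thesis by (simp add: mult.commute)
  qed
  have Hnn: "H k \<ge> 0" for k unfolding H_def by (simp add: infsum_nonneg unn vnn)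
  have Hs: "H summable_on UNIV"
  proof (rule nonneg_bdd_above_summable_on)
    show "bdd_above (sum H ` {F. F \<subseteq> UNIV \<and> finite F})"
    proof (rule bdd_aboveI2)
      fix F :: "(int^'d) set" assume "F \<in> {F. F \<subseteq> UNIV \<and> finite F}"
      then have fin: "finite F" by simp
      have "sum H F = (\<Sum>\<^sub>\<infinity>j. \<Sum>k\<in>F. (u j)\<^sup>2 * v (k - j))"
        unfolding H_def using infsum_finite_sum_swap[OF fin, of "\<lambda>k j. (u j)\<^sup>2 * v (k - j)" UNIV] hs
        by simp
      also have "\<dots> \<le> (\<Sum>\<^sub>\<infinity>j. (u j)\<^sup>2 * V)"
      proof (rule infsum_mono)
        show "(\<lambda>j. \<Sum>k\<in>F. (u j)\<^sup>2 * v (k - j)) summable_on UNIV"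
          using infsum_finite_sum_swap[OF fin, of "\<lambda>k j. (u j)\<^sup>2 * v (k - j)" UNIV] hs by simp
        show "(\<lambda>j. (u j)\<^sup>2 * V) summable_on UNIV" using summable_on_cmult_left[OF u2] by simp
        fix j
        have "(\<Sum>k\<in>F. v (k - j)) \<le> V"
        proof -
          have "(\<Sum>k\<in>F. v (k - j)) = (\<Sum>m\<in>(\<lambda>k. k - j) ` F. v m)"
            by (subst sum.reindex) (auto simp: inj_on_def)
          also have "\<dots> \<le> V" unfolding V_def
            by (rule finite_sum_le_infsum[OF v1]) (auto simp: fin vnn)
          finally show ?thesis .
        qed
        then show "(\<Sum>k\<in>F. (u j)\<^sup>2 * v (k - j)) \<le> (u j)\<^sup>2 * V"
          by (simp add: sum_distrib_left[symmetric] mult_left_mono)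
      qed
      also have "\<dots> = U * V" unfolding U_def using infsum_cmult_left[of "V"] u2
        by (simp add: infsum_cmult_left' mult.commute)
      finally show "sum H F \<le> U * V" .
    qed
  qed (simp add: Hnn)
  show ?thesis
    by (rule summable_on_comparison_test[OF summable_on_cmult_right[OF Hs, of V]])
       (auto simp: conv_le)
qed

lemma W_ge1: "s \<ge> 0 \<Longrightarrow> bracket k powr s \<ge> 1"
  using ge_one_powr_ge_zero[OF bracket_ge1] by blast

lemma conv_summand_summable:
  fixes a c :: "int^'d::finite \<Rightarrow> real"
  assumes a2: "(\<lambda>j. (a j)\<^sup>2) summable_on UNIV" and c2: "(\<lambda>j. (c j)\<^sup>2) summable_on UNIV"
    and nn: "\<And>j. a j * c (k - j) \<ge> 0"
  shows "(\<lambda>j. a j * c (k - j)) summable_on UNIV"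
  by (rule amgm_summable'[OF a2 _ nn]) (use c2 shift_summable[of "\<lambda>j. (c j)\<^sup>2" k] in simp)

lemma conv_weighted:
  fixes a c :: "int^'d::finite \<Rightarrow> real"
  assumes ann: "\<And>j. a j \<ge> 0" and cnn: "\<And>j. c j \<ge> 0" and s: "2 * s > real CARD('d)"
    and aw: "(\<lambda>k. (a k * bracket k powr s)\<^sup>2) summable_on UNIV"
    and cw: "(\<lambda>k. (c k * bracket k powr s)\<^sup>2) summable_on UNIV"
  shows "(\<lambda>k. (conv a c k * bracket k powr s)\<^sup>2) summable_on UNIV"
proof -
  define W where "W k = bracket k powr s" for k :: "int^'d"
  have s0: "s \<ge> 0" using s by (smt (verit) of_nat_0_le_iff)
  have W1: "W k \<ge> 1" for k unfolding W_def using W_ge1[OF s0] .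
  have Wp: "W k > 0" for k using W1[of k] by simp
  have sq_le: "(x k)\<^sup>2 \<le> (x k * W k)\<^sup>2" if "x k \<ge> 0" for x :: "int^'d \<Rightarrow> real" and k
  proof -
    have "x k \<le> x k * W k" using W1[of k] that by (simp add: mult_le_cancel_left1)
    then show ?thesis using that by (intro power_mono) auto
  qed
  have a2: "(\<lambda>k. (a k)\<^sup>2) summable_on UNIV"
    by (rule summable_on_comparison_test[OF aw]) (use sq_le[of a] ann in \<open>auto simp: W_def\<close>)
  have c2: "(\<lambda>k. (c k)\<^sup>2) summable_on UNIV"
    by (rule summable_on_comparison_test[OF cw]) (use sq_le[of c] cnn in \<open>auto simp: W_def\<close>)
  have om: "(\<lambda>k. (inverse (W k))\<^sup>2) summable_on UNIV"
  proof -
    have "(inverse (W k))\<^sup>2 = bracket k powr (- (2 * s))" for k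
      unfolding W_def using bracket_pos[of k]
      by (simp add: powr_minus[symmetric] power_inverse powr_power)
    then show ?thesis using weight_summable[OF s] by simp
  qed
  have a1: "a summable_on UNIV"
  proof -
    have "(\<lambda>k. (a k * W k) * inverse (W k)) summable_on UNIV"
      by (rule amgm_summable'[OF _ om]) (use aw ann Wp in \<open>auto simp: W_def less_imp_le\<close>)
    moreover have "(\<lambda>k. (a k * W k) * inverse (W k)) = a"
      by (intro ext) (metis Wp less_irrefl mult.assoc mult.right_neutral right_inverse)
    ultimately show ?thesis by simp
  qed
  have c1: "c summable_on UNIV"
  proof -
    have "(\<lambda>k. (c k * W k) * inverse (W k)) summable_on UNIV"
      by (rule amgm_summable'[OF _ om]) (use cw cnn Wp in \<open>auto simp: W_def less_imp_le\<close>)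
    moreover have "(\<lambda>k. (c k * W k) * inverse (W k)) = c"
      by (intro ext) (metis Wp less_irrefl mult.assoc mult.right_neutral right_inverse)
    ultimately show ?thesis by simp
  qed
  define Y1 where "Y1 = conv (\<lambda>j. a j * W j) c"
  define Y2 where "Y2 = conv (\<lambda>j. c j * W j) a"
  have Y1s: "(\<lambda>k. (Y1 k)\<^sup>2) summable_on UNIV" unfolding Y1_def
    by (rule young) (use aw c1 ann cnn Wp in \<open>auto simp: W_def less_imp_le\<close>)
  have Y2s: "(\<lambda>k. (Y2 k)\<^sup>2) summable_on UNIV" unfolding Y2_def
    by (rule young) (use cw a1 ann cnn Wp in \<open>auto simp: W_def less_imp_le\<close>)
  have awW: "(\<lambda>j. (a j * W j)\<^sup>2) summable_on UNIV" using aw by (simp add: W_def)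
  have cwW: "(\<lambda>j. (c j * W j)\<^sup>2) summable_on UNIV" using cw by (simp add: W_def)
  have pt: "conv a c k * W k \<le> 2 powr s * (Y1 k + Y2 k)" for k
  proof -
    have sm0: "(\<lambda>j. a j * c (k - j)) summable_on UNIV"
      by (rule conv_summand_summable[OF a2 c2]) (simp add: ann cnn)
    have sm1: "(\<lambda>j. (a j * W j) * c (k - j)) summable_on UNIV"
      by (rule conv_summand_summable[OF awW c2]) (simp add: ann cnn less_imp_le[OF Wp])
    have sm2: "(\<lambda>j. a j * (c (k - j) * W (k - j))) summable_on UNIV"
      by (rule conv_summand_summable[OF a2 cwW, of k]) (simp add: ann cnn less_imp_le[OF Wp])
    have "conv a c k * W k = (\<Sum>\<^sub>\<infinity>j. a j * c (k - j) * W k)"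
      unfolding conv_def by (simp add: infsum_cmult_left')
    also have "\<dots> \<le> (\<Sum>\<^sub>\<infinity>j. 2 powr s * ((a j * W j) * c (k - j) + a j * (c (k - j) * W (k - j))))"
    proof (rule infsum_mono)
      show "(\<lambda>j. a j * c (k - j) * W k) summable_on UNIV" using summable_on_cmult_left[OF sm0] .
      show "(\<lambda>j. 2 powr s * ((a j * W j) * c (k - j) + a j * (c (k - j) * W (k - j)))) summable_on UNIV"
        using summable_on_cmult_right[OF summable_on_add[OF sm1 sm2]] .
      fix j
      have "W k \<le> 2 powr s * (W j + W (k - j))"
        unfolding W_def using bracket_powr_tri[OF s0, of j "k - j"] by simp
      then have "a j * c (k - j) * W k \<le> a j * c (k - j) * (2 powr s * (W j + W (k - j)))"
        by (intro mult_left_mono) (auto simp: ann cnn)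
      then show "a j * c (k - j) * W k \<le> 2 powr s * ((a j * W j) * c (k - j) + a j * (c (k - j) * W (k - j)))"
        by (simp add: algebra_simps)
    qed
    also have "\<dots> = 2 powr s * ((\<Sum>\<^sub>\<infinity>j. (a j * W j) * c (k - j)) + (\<Sum>\<^sub>\<infinity>j. a j * (c (k - j) * W (k - j))))"
      by (simp add: infsum_cmult_right' infsum_add[OF sm1 sm2])
    also have "(\<Sum>\<^sub>\<infinity>j. a j * (c (k - j) * W (k - j))) = Y2 k"
      unfolding Y2_def conv_def
      by (rule infsum_reindex_bij_witness[where i="\<lambda>m. k - m" and j="\<lambda>m. k - m"]) auto
    also have "(\<Sum>\<^sub>\<infinity>j. (a j * W j) * c (k - j)) = Y1 k" unfolding Y1_def conv_def by simp
    finally show ?thesis .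
  qed
  have convnn: "conv a c k \<ge> 0" for k unfolding conv_def by (simp add: infsum_nonneg ann cnn)
  have Y1nn: "Y1 k \<ge> 0" for k unfolding Y1_def conv_def
    by (simp add: infsum_nonneg ann cnn less_imp_le[OF Wp])
  have Y2nn: "Y2 k \<ge> 0" for k unfolding Y2_def conv_def
    by (simp add: infsum_nonneg ann cnn less_imp_le[OF Wp])
  have bnd: "(conv a c k * W k)\<^sup>2 \<le> 2 * (2 powr s)\<^sup>2 * ((Y1 k)\<^sup>2 + (Y2 k)\<^sup>2)" for k
  proof -
    have "(conv a c k * W k)\<^sup>2 \<le> (2 powr s * (Y1 k + Y2 k))\<^sup>2"
      using pt[of k] convnn[of k] Wp[of k] by (intro power_mono) auto
    also have "\<dots> = (2 powr s)\<^sup>2 * (Y1 k + Y2 k)\<^sup>2" by (simp add: power_mult_distrib)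
    also have "\<dots> \<le> (2 powr s)\<^sup>2 * (2 * ((Y1 k)\<^sup>2 + (Y2 k)\<^sup>2))"
      using sum_squares_bound[of "Y1 k" "Y2 k"] by (intro mult_left_mono) (auto simp: power2_sum)
    finally show ?thesis by (simp add: algebra_simps)
  qed
  have "(\<lambda>k. 2 * (2 powr s)\<^sup>2 * ((Y1 k)\<^sup>2 + (Y2 k)\<^sup>2)) summable_on UNIV"
    using summable_on_cmult_right[OF summable_on_add[OF Y1s Y2s]] .
  then have "(\<lambda>k. (conv a c k * W k)\<^sup>2) summable_on UNIV"
    by (rule summable_on_comparison_test) (auto simp: bnd)
  then show ?thesis unfolding W_def .
qed

lemma shift_summable2:
  fixes v :: "int^'d::finite \<Rightarrow> real"
  shows "(\<lambda>l. v (l - j)) summable_on UNIV \<longleftrightarrow> v summable_on UNIV"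
  by (rule summable_on_reindex_bij_witness[where i="\<lambda>m. m + j" and j="\<lambda>m. m - j"]) auto

lemma cprod_summable:
  fixes a b :: "'a \<Rightarrow> complex"
  assumes "(\<lambda>l. (cmod (a l))\<^sup>2) summable_on A" "(\<lambda>l. (cmod (b l))\<^sup>2) summable_on A"
  shows "(\<lambda>l. a l * b l) summable_on A"
  using amgm_summable[OF assms] by (simp add: summable_on_iff_abs_summable_on_complex norm_mult)

lemma entry_eq: "A i l = diag_k A (i - l) i" by (simp add: diag_k_def)

lemma sq_terms_eq: "sq_terms nB s A k = (nB (diag_k A k) * bracket k powr s)\<^sup>2"
  unfolding sq_terms_def using bracket_pos[of k]
  by (simp add: power_mult_distrib powr_power mult.commute)

context sba begin

lemma M_diag_in: "A \<in> M_s B nB s \<Longrightarrow> diag_k A k \<in> B"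
  unfolding M_s_def in_M_def by auto

lemma M_sq_summable: "A \<in> M_s B nB s \<Longrightarrow> sq_terms nB s A summable_on UNIV"
  unfolding M_s_def by auto

lemma entry_bound: "A \<in> M_s B nB s \<Longrightarrow> cmod (A i l) \<le> nB (diag_k A (i - l))"
  using eval_bound[OF M_diag_in, of A s "i - l" i] by (simp add: diag_k_def)

lemma sq_terms_nonneg: "sq_terms nB s A k \<ge> 0"
  unfolding sq_terms_def by simp

lemma dsq_le: "s \<ge> 0 \<Longrightarrow> (nB (diag_k A k))\<^sup>2 \<le> sq_terms nB s A k"
  unfolding sq_terms_def using W_ge1[of "2 * s" k]
  by (simp add: mult_le_cancel_left1)

lemma mnorm_sq: "(mnorm nB s A)\<^sup>2 = (\<Sum>\<^sub>\<infinity>k. sq_terms nB s A k)"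
proof -
  have "0 \<le> (\<Sum>\<^sub>\<infinity>k. sq_terms nB s A k)" by (rule infsum_nonneg) (rule sq_terms_nonneg)
  then show ?thesis unfolding mnorm_def by (rule real_sqrt_pow2)
qed

lemma mnorm_nonneg: "mnorm nB s A \<ge> 0"
proof -
  have "0 \<le> (\<Sum>\<^sub>\<infinity>k. sq_terms nB s A k)" by (rule infsum_nonneg) (rule sq_terms_nonneg)
  then show ?thesis unfolding mnorm_def by simp
qed

lemma dsq_summable:
  assumes "A \<in> M_s B nB s" "s \<ge> 0"
  shows "(\<lambda>k. (nB (diag_k A k))\<^sup>2) summable_on UNIV"
    and "(\<Sum>\<^sub>\<infinity>k. (nB (diag_k A k))\<^sup>2) \<le> (mnorm nB s A)\<^sup>2"
proof -
  show s1: "(\<lambda>k. (nB (diag_k A k))\<^sup>2) summable_on UNIV"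
    by (rule summable_on_comparison_test[OF M_sq_summable[OF assms(1)]]) (auto simp: dsq_le assms)
  show "(\<Sum>\<^sub>\<infinity>k. (nB (diag_k A k))\<^sup>2) \<le> (mnorm nB s A)\<^sup>2"
    unfolding mnorm_sq by (rule infsum_mono[OF s1 M_sq_summable[OF assms(1)]]) (simp add: dsq_le assms)
qed

lemma diag0_le_mnorm:
  assumes "A \<in> M_s B nB s"
  shows "nB (diag_k A 0) \<le> mnorm nB s A"
proof -
  have "sq_terms nB s A 0 \<le> (\<Sum>\<^sub>\<infinity>k. sq_terms nB s A k)"
    using finite_sum_le_infsum[OF M_sq_summable[OF assms], of "{0}"] by (simp add: sq_terms_nonneg)
  then have "(nB (diag_k A 0))\<^sup>2 \<le> (mnorm nB s A)\<^sup>2"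
    unfolding mnorm_sq sq_terms_def by (simp add: bracket_0)
  then show ?thesis using mnorm_nonneg[of s A] nB_nonneg[OF M_diag_in[OF assms]]
    by (meson power2_le_imp_le)
qed

lemma row_sq:
  assumes "A \<in> M_s B nB s" "s \<ge> 0"
  shows "(\<lambda>l. (cmod (A i l))\<^sup>2) summable_on UNIV"
proof (rule summable_on_comparison_test)
  show "(\<lambda>l. (nB (diag_k A (i - l)))\<^sup>2) summable_on UNIV"
    using dsq_summable(1)[OF assms] shift_summable[of "\<lambda>k. (nB (diag_k A k))\<^sup>2" i] by simp
  show "(cmod (A i l))\<^sup>2 \<le> (nB (diag_k A (i - l)))\<^sup>2" for l
    using entry_bound[OF assms(1), of i l] by (intro power_mono) auto
qed simp

lemma col_sq:
  assumes "A \<in> M_s B nB s" "s \<ge> 0"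
  shows "(\<lambda>l. (cmod (A l j))\<^sup>2) summable_on UNIV"
proof (rule summable_on_comparison_test)
  show "(\<lambda>l. (nB (diag_k A (l - j)))\<^sup>2) summable_on UNIV"
    using dsq_summable(1)[OF assms] shift_summable2[of "\<lambda>k. (nB (diag_k A k))\<^sup>2" j] by simp
  show "(cmod (A l j))\<^sup>2 \<le> (nB (diag_k A (l - j)))\<^sup>2" for l
    using entry_bound[OF assms(1), of l j] by (intro power_mono) auto
qed simp

lemma mult_M:
  assumes A: "A \<in> M_s B nB s" and C: "C \<in> M_s B nB s" and s: "2 * s > real CARD('d)"
  shows "mat_mult A C \<in> M_s B nB s"
proof -
  have s0: "s \<ge> 0" using s by (smt (verit) of_nat_0_le_iff)
  define a where "a k = nB (diag_k A k)" for k
  define c where "c k = nB (diag_k C k)" for k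
  have ann: "a k \<ge> 0" for k unfolding a_def using nB_nonneg[OF M_diag_in[OF A]] .
  have cnn: "c k \<ge> 0" for k unfolding c_def using nB_nonneg[OF M_diag_in[OF C]] .
  have a2: "(\<lambda>k. (a k)\<^sup>2) summable_on UNIV" unfolding a_def using dsq_summable(1)[OF A s0] .
  have c2: "(\<lambda>k. (c k)\<^sup>2) summable_on UNIV" unfolding c_def using dsq_summable(1)[OF C s0] .
  have diag: "diag_k (mat_mult A C) k \<in> B \<and> nB (diag_k (mat_mult A C) k) \<le> conv a c k" for k
  proof -
    define t where "t j = (\<lambda>i. diag_k A j i * shift_seq j (diag_k C (k - j)) i)" for j
    have eq: "diag_k (mat_mult A C) k = (\<lambda>i. \<Sum>\<^sub>\<infinity>j. t j i)"
    proof
      fix i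
      show "diag_k (mat_mult A C) k i = (\<Sum>\<^sub>\<infinity>j. t j i)"
        unfolding diag_k_def mat_mult_def t_def shift_seq_def
        by (rule infsum_reindex_bij_witness[where i="\<lambda>m. i - m" and j="\<lambda>m. i - m"])
           (auto simp: algebra_simps)
    qed
    have tB: "t j \<in> B" for j
      unfolding t_def by (intro mult_in shift_in M_diag_in[OF A] M_diag_in[OF C])
    have tn: "nB (t j) \<le> a j * c (k - j)" for j
    proof -
      have "nB (t j) \<le> nB (diag_k A j) * nB (shift_seq j (diag_k C (k - j)))"
        unfolding t_def by (intro nB_mult shift_in M_diag_in[OF A] M_diag_in[OF C])
      then show ?thesis unfolding a_def c_def using nB_shift[OF M_diag_in[OF C]] by simp
    qed
    have cs: "(\<lambda>j. a j * c (k - j)) summable_on UNIV"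
      by (rule conv_summand_summable[OF a2 c2]) (simp add: ann cnn)
    have ts: "(\<lambda>j. nB (t j)) summable_on UNIV"
      by (rule summable_on_comparison_test[OF cs]) (auto simp: tn nB_nonneg[OF tB])
    have "nB (\<lambda>i. \<Sum>\<^sub>\<infinity>j. t j i) \<le> (\<Sum>\<^sub>\<infinity>j. nB (t j))" using series_in[OF tB ts] by simp
    also have "\<dots> \<le> conv a c k" unfolding conv_def by (rule infsum_mono[OF ts cs]) (simp add: tn)
    finally show ?thesis using series_in[OF tB ts] unfolding eq by simp
  qed
  have inM: "in_M B (mat_mult A C)" unfolding in_M_def using diag by blast
  have cw: "(\<lambda>k. (conv a c k * bracket k powr s)\<^sup>2) summable_on UNIV"
  proof (rule conv_weighted[OF ann cnn s])
    show "(\<lambda>k. (a k * bracket k powr s)\<^sup>2) summable_on UNIV"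
      using M_sq_summable[OF A] unfolding a_def sq_terms_eq .
    show "(\<lambda>k. (c k * bracket k powr s)\<^sup>2) summable_on UNIV"
      using M_sq_summable[OF C] unfolding c_def sq_terms_eq .
  qed
  have "sq_terms nB s (mat_mult A C) summable_on UNIV"
  proof (rule summable_on_comparison_test[OF cw])
    fix k
    show "sq_terms nB s (mat_mult A C) k \<le> (conv a c k * bracket k powr s)\<^sup>2"
      unfolding sq_terms_eq using diag[of k] nB_nonneg W_ge1[OF s0, of k]
      by (intro power_mono mult_right_mono) auto
  qed (simp add: sq_terms_nonneg)
  then show ?thesis using inM unfolding M_s_def by simp
qed

lemma sub_id_M:
  assumes A: "A \<in> M_s B nB s"
  shows "mat_sub A mat_id \<in> M_s B nB s"
proof -
  have dg: "diag_k (mat_sub A mat_id) k = (\<lambda>i. diag_k A k i - (if k = 0 then 1 else 0))" for k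
    unfolding diag_k_def mat_sub_def mat_id_def by auto
  have inM: "in_M B (mat_sub A mat_id)" unfolding in_M_def dg
    using diff_in[OF M_diag_in[OF A] const_in] by blast
  have le: "sq_terms nB s (mat_sub A mat_id) k \<le> sq_terms nB s A k +
      (if k = 0 then sq_terms nB s (mat_sub A mat_id) 0 else 0)" for k
    by (cases "k = 0") (auto simp: sq_terms_def dg sq_terms_nonneg)
  have f: "(\<lambda>k. if k = 0 then sq_terms nB s (mat_sub A mat_id) 0 else 0) summable_on UNIV"
    by (rule finite_nonzero_values_imp_summable_on) (auto simp: Collect_conv_if)
  have "sq_terms nB s (mat_sub A mat_id) summable_on UNIV"
    by (rule summable_on_comparison_test[OF summable_on_add[OF M_sq_summable[OF A] f]])
       (auto simp: le sq_terms_nonneg)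
  then show ?thesis using inM unfolding M_s_def by simp
qed

end

lemma infsum_single_pt:
  fixes c :: "'b::{topological_comm_monoid_add, t2_space}"
  shows "(\<Sum>\<^sub>\<infinity>l. if l = i then c else 0) = c"
proof -
  have "(\<Sum>\<^sub>\<infinity>l. if l = i then c else 0) = (\<Sum>\<^sub>\<infinity>l\<in>{i}. if l = i then c else 0)"
    by (rule infsum_cong_neutral) auto
  then show ?thesis by simp
qed

lemma single_pt_summable: "(\<lambda>l. if l = i then c else 0) summable_on A"
  by (rule finite_nonzero_values_imp_summable_on) (auto intro: finite_subset[of _ "{i}"])

lemma diag_of_diagonal:
  assumes "\<forall>i j. i \<noteq> j \<longrightarrow> X i j = 0"
  shows "diag_k X k = (if k = 0 then (\<lambda>i. X i i) else (\<lambda>_. 0))"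
  using assms unfolding diag_k_def by auto

context sba begin

lemma diagonal_M_s:
  assumes off: "\<forall>i j. i \<noteq> j \<longrightarrow> X i j = 0" and xB: "(\<lambda>i. X i i) \<in> B"
  shows "X \<in> M_s B nB s" and "mnorm nB s X = nB (\<lambda>i. X i i)"
proof -
  have dg: "diag_k X k = (if k = 0 then (\<lambda>i. X i i) else (\<lambda>_. 0))" for k
    using diag_of_diagonal[OF off] .
  have sq: "sq_terms nB s X k = (if k = 0 then (nB (\<lambda>i. X i i))\<^sup>2 else 0)" for k
    unfolding sq_terms_def dg by (auto simp: nB_zero bracket_0)
  have "sq_terms nB s X summable_on UNIV" unfolding sq
    by (rule single_pt_summable)
  moreover have "in_M B X" unfolding in_M_def dg using xB zero_in by auto
  ultimately show "X \<in> M_s B nB s" unfolding M_s_def by simp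
  show "mnorm nB s X = nB (\<lambda>i. X i i)"
    unfolding mnorm_def sq infsum_single_pt using nB_nonneg[OF xB] by simp
qed

lemma row_x_col_summable:
  assumes A: "A \<in> M_s B nB s" and C: "C \<in> M_s B nB s" and s: "s \<ge> 0" and xB: "x \<in> B"
  shows "(\<lambda>l. A i l * x l * C l j) summable_on UNIV"
proof (rule cprod_summable)
  show "(\<lambda>l. (cmod (A i l * x l))\<^sup>2) summable_on UNIV"
  proof (rule summable_on_comparison_test[OF summable_on_cmult_left[OF row_sq[OF A s, of i], of "(nB x)\<^sup>2"]])
    fix l
    have "cmod (x l) \<le> nB x" using eval_bound[OF xB] .
    then have "(cmod (x l))\<^sup>2 \<le> (nB x)\<^sup>2" by (intro power_mono) auto
    then show "(cmod (A i l * x l))\<^sup>2 \<le> (cmod (A i l))\<^sup>2 * (nB x)\<^sup>2"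
      by (simp add: norm_mult power_mult_distrib mult_left_mono)
  qed simp
  show "(\<lambda>l. (cmod (C l j))\<^sup>2) summable_on UNIV" using col_sq[OF C s] .
qed

lemma contraction:
  assumes RB: "\<And>x. x \<in> B \<Longrightarrow> R x \<in> B"
    and Rlin: "\<And>x y. x \<in> B \<Longrightarrow> y \<in> B \<Longrightarrow> (\<lambda>i. R x i - R y i) = R (\<lambda>i. x i - y i)"
    and Rn: "\<And>x. x \<in> B \<Longrightarrow> nB (R x) \<le> \<epsilon> * nB x" and eps: "0 \<le> \<epsilon>" "\<epsilon> < 1"
    and DB: "D \<in> B"
  shows "\<exists>z\<in>B. \<forall>i. z i - R z i = D i"
proof -
  define y where "y = rec_nat D (\<lambda>_ z. (\<lambda>i. D i + R z i))"
  have y0: "y 0 = D" and yS: "y (Suc n) = (\<lambda>i. D i + R (y n) i)" for n unfolding y_def by simp_all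
  have yB: "y n \<in> B" for n by (induction n) (auto simp: y0 yS DB intro: add_in RB)
  define C where "C = nB (\<lambda>i. y (Suc 0) i - y 0 i)"
  have C0: "C \<ge> 0" unfolding C_def by (rule nB_nonneg[OF diff_in[OF yB yB]])
  have step: "nB (\<lambda>i. y (Suc n) i - y n i) \<le> C * \<epsilon> ^ n" for n
  proof (induction n)
    case 0 then show ?case unfolding C_def by simp
  next
    case (Suc n)
    have "(\<lambda>i. y (Suc (Suc n)) i - y (Suc n) i) = (\<lambda>i. R (y (Suc n)) i - R (y n) i)"
      by (simp add: yS)
    also have "\<dots> = R (\<lambda>i. y (Suc n) i - y n i)" using Rlin[OF yB yB] .
    finally have "nB (\<lambda>i. y (Suc (Suc n)) i - y (Suc n) i) \<le> \<epsilon> * nB (\<lambda>i. y (Suc n) i - y n i)"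
      using Rn[OF diff_in[OF yB yB]] by simp
    also have "\<dots> \<le> \<epsilon> * (C * \<epsilon> ^ n)" using Suc eps by (intro mult_left_mono) auto
    finally show ?case by (simp add: algebra_simps)
  qed
  obtain z where zB: "z \<in> B" and lim: "(\<lambda>n. nB (\<lambda>i. y n i - z i)) \<longlonglongrightarrow> 0"
    using geom_cauchy[where f=y and r=\<epsilon> and C=C, OF yB eps C0] step by auto
  define w where "w = (\<lambda>i. z i - (D i + R z i))"
  have wB: "w \<in> B" unfolding w_def by (intro diff_in add_in zB DB RB)
  have wb: "nB w \<le> nB (\<lambda>i. y (Suc n) i - z i) + \<epsilon> * nB (\<lambda>i. y n i - z i)" for n
  proof -
    have eq: "w = (\<lambda>i. (z i - y (Suc n) i) + (R (y n) i - R z i))"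
      unfolding w_def yS by auto
    have "nB w \<le> nB (\<lambda>i. z i - y (Suc n) i) + nB (\<lambda>i. R (y n) i - R z i)"
      unfolding eq by (intro nB_add diff_in zB yB RB)
    also have "nB (\<lambda>i. z i - y (Suc n) i) = nB (\<lambda>i. y (Suc n) i - z i)"
      using nB_diff_commute[OF zB yB] .
    also have "nB (\<lambda>i. R (y n) i - R z i) \<le> \<epsilon> * nB (\<lambda>i. y n i - z i)"
      using Rlin[OF yB zB] Rn[OF diff_in[OF yB zB]] by simp
    finally show ?thesis by simp
  qed
  have "(\<lambda>n. nB (\<lambda>i. y (Suc n) i - z i) + \<epsilon> * nB (\<lambda>i. y n i - z i)) \<longlonglongrightarrow> 0 + \<epsilon> * 0"
    using LIMSEQ_Suc[OF lim] lim by (intro tendsto_intros) auto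
  then have "nB w \<le> 0" using wb by (intro LIMSEQ_le_const[OF _ exI[of _ 0]]) auto
  then have "w = (\<lambda>_. 0)" using nB_nonneg[OF wB] nB_eq0[OF wB] by simp
  then have "\<forall>i. z i - (D i + R z i) = 0" unfolding w_def by (simp add: fun_eq_iff)
  then have "\<forall>i. z i - R z i = D i" by (simp add: algebra_simps)
  then show ?thesis using zB by blast
qed

end

context sba begin

lemma T_bound:
  assumes Qi: "Qi \<in> M_s B nB s" and Q: "Q \<in> M_s B nB s" and s: "s \<ge> 0" and xB: "x \<in> B"
    and a: "mnorm nB s (mat_sub Qi mat_id) \<le> a" and b: "mnorm nB s (mat_sub Q mat_id) \<le> b"
  shows "(\<lambda>i. (\<Sum>\<^sub>\<infinity>l. Qi i l * x l * Q l i) - x i) \<in> B \<and>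
         nB (\<lambda>i. (\<Sum>\<^sub>\<infinity>l. Qi i l * x l * Q l i) - x i) \<le> (a + b + (a\<^sup>2 + b\<^sup>2) / 2) * nB x"
proof -
  define E where "E = mat_sub Qi mat_id"
  define F where "F = mat_sub Q mat_id"
  have EM: "E \<in> M_s B nB s" unfolding E_def using sub_id_M[OF Qi] .
  have FM: "F \<in> M_s B nB s" unfolding F_def using sub_id_M[OF Q] .
  define e where "e j = nB (diag_k E j)" for j
  define f where "f j = nB (diag_k F j)" for j
  have enn: "e j \<ge> 0" for j unfolding e_def using nB_nonneg[OF M_diag_in[OF EM]] .
  have fnn: "f j \<ge> 0" for j unfolding f_def using nB_nonneg[OF M_diag_in[OF FM]] .
  have xnn: "nB x \<ge> 0" using nB_nonneg[OF xB] .
  have a0: "mnorm nB s E \<le> a" "0 \<le> a" using a mnorm_nonneg[of s E] unfolding E_def by auto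
  have b0: "mnorm nB s F \<le> b" "0 \<le> b" using b mnorm_nonneg[of s F] unfolding F_def by auto
  have decomp: "Qi i l * x l * Q l i = E i l * x l * F l i + (if l = i then x i * (E i i + F i i) + x i else 0)"
    for i l
    by (cases "l = i") (auto simp: E_def F_def mat_sub_def mat_id_def algebra_simps)
  define G where "G = (\<lambda>i. \<Sum>\<^sub>\<infinity>l. E i l * x l * F l i)"
  have Tsplit: "(\<Sum>\<^sub>\<infinity>l. Qi i l * x l * Q l i) - x i = diag_k E 0 i * x i + x i * diag_k F 0 i + G i" for i
  proof -
    have "(\<Sum>\<^sub>\<infinity>l. Qi i l * x l * Q l i)
        = (\<Sum>\<^sub>\<infinity>l. E i l * x l * F l i) + (\<Sum>\<^sub>\<infinity>l. if l = i then x i * (E i i + F i i) + x i else 0)"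
      unfolding decomp by (rule infsum_add[OF row_x_col_summable[OF EM FM s xB] single_pt_summable])
    then show ?thesis unfolding G_def infsum_single_pt by (simp add: diag_k_def algebra_simps)
  qed
  define g where "g j = (\<lambda>i. diag_k E j i * shift_seq j (\<lambda>m. x m * diag_k F (- j) m) i)" for j
  have Geq: "G = (\<lambda>i. \<Sum>\<^sub>\<infinity>j. g j i)"
  proof
    fix i
    show "G i = (\<Sum>\<^sub>\<infinity>j. g j i)"
      unfolding G_def g_def diag_k_def shift_seq_def
      by (rule infsum_reindex_bij_witness[where i="\<lambda>m. i - m" and j="\<lambda>m. i - m"])
         (auto simp: algebra_simps)
  qed
  have gB: "g j \<in> B" for j
    unfolding g_def by (intro mult_in shift_in M_diag_in[OF EM] M_diag_in[OF FM] xB)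
  have gn: "nB (g j) \<le> nB x * (e j * f (- j))" for j
  proof -
    have h1: "nB (g j) \<le> e j * nB (shift_seq j (\<lambda>m. x m * diag_k F (- j) m))"
      unfolding g_def e_def by (intro nB_mult shift_in mult_in M_diag_in[OF EM] M_diag_in[OF FM] xB)
    have "nB (shift_seq j (\<lambda>m. x m * diag_k F (- j) m)) = nB (\<lambda>m. x m * diag_k F (- j) m)"
      by (intro nB_shift mult_in M_diag_in[OF FM] xB)
    also have "\<dots> \<le> nB x * f (- j)" unfolding f_def by (intro nB_mult M_diag_in[OF FM] xB)
    finally have h2: "nB (shift_seq j (\<lambda>m. x m * diag_k F (- j) m)) \<le> nB x * f (- j)" .
    have "nB (g j) \<le> e j * (nB x * f (- j))"
      using h1 mult_left_mono[OF h2 enn[of j]] by linarith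
    then show ?thesis by (simp add: mult_ac)
  qed
  have e2: "(\<lambda>j. (e j)\<^sup>2) summable_on UNIV" unfolding e_def using dsq_summable(1)[OF EM s] .
  have f2: "(\<lambda>j. (f j)\<^sup>2) summable_on UNIV" unfolding f_def using dsq_summable(1)[OF FM s] .
  have f2m: "(\<lambda>j. (f (- j))\<^sup>2) summable_on UNIV"
    using f2 shift_summable[of "\<lambda>j. (f j)\<^sup>2" 0] by simp
  have ef: "(\<lambda>j. e j * f (- j)) summable_on UNIV"
    by (rule amgm_summable'[OF e2 f2m]) (simp add: enn fnn)
  have gs: "(\<lambda>j. nB (g j)) summable_on UNIV"
    by (rule summable_on_comparison_test[OF summable_on_cmult_right[OF ef, of "nB x"]])
       (auto simp: gn nB_nonneg[OF gB])
  have GB: "G \<in> B" and Gn0: "nB G \<le> (\<Sum>\<^sub>\<infinity>j. nB (g j))" unfolding Geq using series_in[OF gB gs] by auto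
  have "(\<Sum>\<^sub>\<infinity>j. nB (g j)) \<le> (\<Sum>\<^sub>\<infinity>j. nB x * (e j * f (- j)))"
    by (rule infsum_mono[OF gs summable_on_cmult_right[OF ef]]) (simp add: gn)
  also have "\<dots> = nB x * (\<Sum>\<^sub>\<infinity>j. e j * f (- j))" by (simp add: infsum_cmult_right')
  also have "(\<Sum>\<^sub>\<infinity>j. e j * f (- j)) \<le> (\<Sum>\<^sub>\<infinity>j. (e j)\<^sup>2) / 2 + (\<Sum>\<^sub>\<infinity>j. (f (- j))\<^sup>2) / 2"
    using amgm_infsum[OF e2 f2m] .
  also have "(\<Sum>\<^sub>\<infinity>j. (f (- j))\<^sup>2) = (\<Sum>\<^sub>\<infinity>j. (f j)\<^sup>2)"
    using shift_infsum[of "\<lambda>j. (f j)\<^sup>2" 0] by simp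
  also have "(\<Sum>\<^sub>\<infinity>j. (e j)\<^sup>2) \<le> a\<^sup>2"
    using dsq_summable(2)[OF EM s] a0 mnorm_nonneg[of s E] unfolding e_def
    by (meson order_trans power_mono)
  also have "(\<Sum>\<^sub>\<infinity>j. (f j)\<^sup>2) \<le> b\<^sup>2"
    using dsq_summable(2)[OF FM s] b0 mnorm_nonneg[of s F] unfolding f_def
    by (meson order_trans power_mono)
  finally have Gn: "nB G \<le> nB x * (a\<^sup>2 / 2 + b\<^sup>2 / 2)" using Gn0 xnn
    by (smt (verit, best) divide_right_mono mult_left_mono zero_le_power2 add_mono)
  define T0 where "T0 = (\<lambda>i. diag_k E 0 i * x i + x i * diag_k F 0 i + G i)"
  have Teq: "(\<lambda>i. (\<Sum>\<^sub>\<infinity>l. Qi i l * x l * Q l i) - x i) = T0" unfolding T0_def using Tsplit by auto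
  have e0: "e 0 \<le> a" unfolding e_def using diag0_le_mnorm[OF EM] a0 by simp
  have f0: "f 0 \<le> b" unfolding f_def using diag0_le_mnorm[OF FM] b0 by simp
  have m1: "(\<lambda>i. diag_k E 0 i * x i) \<in> B" by (intro mult_in M_diag_in[OF EM] xB)
  have m2: "(\<lambda>i. x i * diag_k F 0 i) \<in> B" by (intro mult_in M_diag_in[OF FM] xB)
  have T0B: "T0 \<in> B" unfolding T0_def by (intro add_in m1 m2 GB)
  have "nB T0 \<le> nB (\<lambda>i. diag_k E 0 i * x i + x i * diag_k F 0 i) + nB G"
    unfolding T0_def by (intro nB_add add_in m1 m2 GB)
  also have "\<dots> \<le> (nB (\<lambda>i. diag_k E 0 i * x i) + nB (\<lambda>i. x i * diag_k F 0 i)) + nB G"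
    by (intro add_mono nB_add m1 m2) simp
  also have "\<dots> \<le> (e 0 * nB x + nB x * f 0) + nB x * (a\<^sup>2 / 2 + b\<^sup>2 / 2)"
    unfolding e_def f_def by (intro add_mono nB_mult M_diag_in[OF EM] M_diag_in[OF FM] xB Gn)
  also have "\<dots> \<le> (a * nB x + nB x * b) + nB x * (a\<^sup>2 / 2 + b\<^sup>2 / 2)"
    using e0 f0 xnn by (intro add_mono mult_right_mono mult_left_mono) auto
  also have "\<dots> = (a + b + (a\<^sup>2 + b\<^sup>2) / 2) * nB x" by (simp add: algebra_simps)
  finally show ?thesis unfolding Teq using T0B by simp
qed

end

lemma main_diag_zero: "main_diag M = (\<lambda>_ _. 0) \<longleftrightarrow> (\<forall>i. M i i = 0)"
proof
  assume h: "main_diag M = (\<lambda>_ _. 0)"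
  show "\<forall>i. M i i = 0"
  proof
    fix i
    show "M i i = 0" using fun_cong[OF fun_cong[OF h, of i], of i] by (simp add: main_diag_def)
  qed
next
  assume "\<forall>i. M i i = 0"
  then show "main_diag M = (\<lambda>_ _. 0)" by (auto simp: main_diag_def fun_eq_iff)
qed

context sba begin

lemma M0_inf_iff: "X \<in> M0_inf B nB \<longleftrightarrow> (\<forall>i j. i \<noteq> j \<longrightarrow> X i j = 0) \<and> (\<lambda>i. X i i) \<in> B"
proof
  assume X: "X \<in> M0_inf B nB"
  then have XI: "X \<in> M_inf B nB" and off: "\<forall>i j. i \<noteq> j \<longrightarrow> X i j = 0"
    unfolding M0_inf_def by simp_all
  from XI have "X \<in> M_s B nB 0" unfolding M_inf_def by simp
  then have "diag_k X 0 \<in> B" by (rule M_diag_in)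
  then have "(\<lambda>i. X i i) \<in> B" by (simp add: diag_k_def)
  then show "(\<forall>i j. i \<noteq> j \<longrightarrow> X i j = 0) \<and> (\<lambda>i. X i i) \<in> B" using off by simp
next
  assume h: "(\<forall>i j. i \<noteq> j \<longrightarrow> X i j = 0) \<and> (\<lambda>i. X i i) \<in> B"
  then have "X \<in> M_s B nB s" for s using diagonal_M_s(1)[of X] by simp
  then have "X \<in> M_inf B nB" unfolding M_inf_def by simp
  then show "X \<in> M0_inf B nB" using h unfolding M0_inf_def by simp
qed

end

theorem lemma4p4:
  fixes B :: "('d::finite) seq set" and nB :: "'d seq \<Rightarrow> real"
    and \<alpha>0 :: real and Q Qi P P' :: "'d mat"
  assumes BA: "seq_banach_algebra B nB"
    and alpha: "\<alpha>0 > real CARD('d) / 2"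
    and Q: "Q \<in> M_s B nB \<alpha>0" and Qi: "Qi \<in> M_s B nB \<alpha>0"
    and inv1: "mat_mult Q Qi = mat_id" and inv2: "mat_mult Qi Q = mat_id"
    and small1: "(K0 \<alpha>0 TYPE('d) + K1 \<alpha>0 \<alpha>0 TYPE('d)) * mnorm nB \<alpha>0 (mat_sub Q mat_id) \<le> 1/10"
    and small2: "(K0 \<alpha>0 TYPE('d) + K1 \<alpha>0 \<alpha>0 TYPE('d)) * mnorm nB \<alpha>0 (mat_sub Qi mat_id) \<le> 1/10"
    and P: "P \<in> M_s B nB \<alpha>0" and P': "P' \<in> M_s B nB \<alpha>0"
  shows "(\<exists>!X. X \<in> M0_inf B nB \<and>
            main_diag (mat_add (mat_mult (mat_mult Qi (mat_add X P)) Q) P') = (\<lambda>_ _. 0))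
       \<and> (\<forall>X. X \<in> M0_inf B nB \<and>
            main_diag (mat_add (mat_mult (mat_mult Qi (mat_add X P)) Q) P') = (\<lambda>_ _. 0)
          \<longrightarrow> mnorm nB \<alpha>0 X \<le> 2 * (mnorm nB \<alpha>0 (mat_mult (mat_mult Qi P) Q) + mnorm nB \<alpha>0 P'))"
proof -
  interpret sba B nB by (rule sba.intro[OF BA])
  have s2: "2 * \<alpha>0 > real CARD('d)" using alpha by simp
  have s0: "\<alpha>0 \<ge> 0" using alpha by (smt (verit) divide_nonneg_nonneg of_nat_0_le_iff)
  define Sw where "Sw = (\<Sum>\<^sub>\<infinity>k::int^'d. bracket k powr (-2 * \<alpha>0))"
  have Sws: "(\<lambda>k::int^'d. bracket k powr (-2 * \<alpha>0)) summable_on UNIV"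
    using weight_summable[OF s2] by simp
  have Sw1: "Sw \<ge> 1"
    using finite_sum_le_infsum[OF Sws, of "{0}"] unfolding Sw_def by (simp add: bracket_0)
  have K0ge: "K0 \<alpha>0 TYPE('d) \<ge> 4"
  proof -
    have "sqrt (4\<^sup>2) \<le> sqrt (20 * Sw)" using Sw1 by (intro real_sqrt_le_mono) simp
    then have "4 \<le> sqrt (20 * Sw)" by simp
    then show ?thesis unfolding K0_def Sw_def by simp
  qed
  have K1ge: "K1 \<alpha>0 \<alpha>0 TYPE('d) \<ge> 0"
    unfolding K1_def using Sw1 unfolding Sw_def by (intro mult_nonneg_nonneg) auto
  define C0 where "C0 = K0 \<alpha>0 TYPE('d) + K1 \<alpha>0 \<alpha>0 TYPE('d)"
  have C0: "C0 \<ge> 4" unfolding C0_def using K0ge K1ge by simp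
  have small_imp: "m \<le> 1/40" if "C0 * m \<le> 1/10" "m \<ge> 0" for m
  proof -
    have "4 * m \<le> C0 * m" using C0 that(2) by (intro mult_right_mono) auto
    then show ?thesis using that(1) by simp
  qed
  have mQi: "mnorm nB \<alpha>0 (mat_sub Qi mat_id) \<le> 1/40"
    using small_imp[OF small2[folded C0_def] mnorm_nonneg] .
  have mQ: "mnorm nB \<alpha>0 (mat_sub Q mat_id) \<le> 1/40"
    using small_imp[OF small1[folded C0_def] mnorm_nonneg] .
  define \<epsilon> :: real where "\<epsilon> = 1/40 + 1/40 + ((1/40)\<^sup>2 + (1/40)\<^sup>2) / 2"
  have eps: "0 \<le> \<epsilon>" "\<epsilon> \<le> 1/2" unfolding \<epsilon>_def by (simp_all add: power2_eq_square)
  have eps_lt: "\<epsilon> < 1" using eps(2) by simp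
  define T where "T x = (\<lambda>i. \<Sum>\<^sub>\<infinity>l. Qi i l * x l * Q l i)" for x
  have TB: "(\<lambda>i. T x i - x i) \<in> B \<and> nB (\<lambda>i. T x i - x i) \<le> \<epsilon> * nB x" if "x \<in> B" for x
    unfolding T_def \<epsilon>_def using T_bound[OF Qi Q s0 that mQi mQ] by simp
  have Tsum: "(\<lambda>l. Qi i l * x l * Q l i) summable_on UNIV" if "x \<in> B" for x i
    using row_x_col_summable[OF Qi Q s0 that] .
  have Tlin: "T (\<lambda>i. x i - y i) = (\<lambda>i. T x i - T y i)" if "x \<in> B" "y \<in> B" for x y
  proof
    fix i
    have "T (\<lambda>i. x i - y i) i = (\<Sum>\<^sub>\<infinity>l. Qi i l * x l * Q l i + - (Qi i l * y l * Q l i))"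
      unfolding T_def by (simp add: algebra_simps)
    also have "\<dots> = (\<Sum>\<^sub>\<infinity>l. Qi i l * x l * Q l i) + (\<Sum>\<^sub>\<infinity>l. - (Qi i l * y l * Q l i))"
      by (rule infsum_add[OF Tsum[OF that(1)] summable_on_uminus[THEN iffD2, OF Tsum[OF that(2)]]])
    also have "\<dots> = T x i - T y i" unfolding T_def by (simp add: infsum_uminus)
    finally show "T (\<lambda>i. x i - y i) i = T x i - T y i" .
  qed
  have QiP: "mat_mult Qi P \<in> M_s B nB \<alpha>0" using mult_M[OF Qi P s2] .
  have QiPQ: "mat_mult (mat_mult Qi P) Q \<in> M_s B nB \<alpha>0" using mult_M[OF QiP Q s2] .
  define Dd where "Dd = (\<lambda>i. mat_mult (mat_mult Qi P) Q i i + P' i i)"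
  have d0: "diag_k A 0 = (\<lambda>i. A i i)" for A :: "'d mat" by (simp add: diag_k_def)
  have DdB: "Dd \<in> B" unfolding Dd_def
    using add_in[OF M_diag_in[OF QiPQ, of 0] M_diag_in[OF P', of 0]] by (simp add: d0)
  have Ddn: "nB Dd \<le> mnorm nB \<alpha>0 (mat_mult (mat_mult Qi P) Q) + mnorm nB \<alpha>0 P'"
  proof -
    have "nB Dd \<le> nB (diag_k (mat_mult (mat_mult Qi P) Q) 0) + nB (diag_k P' 0)"
      unfolding Dd_def using nB_add[OF M_diag_in[OF QiPQ, of 0] M_diag_in[OF P', of 0]] by (simp add: d0)
    then show ?thesis using diag0_le_mnorm[OF QiPQ] diag0_le_mnorm[OF P'] by simp
  qed
  have key: "main_diag (mat_add (mat_mult (mat_mult Qi (mat_add X P)) Q) P') = (\<lambda>_ _. 0)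
      \<longleftrightarrow> (\<forall>i. T (\<lambda>i. X i i) i + Dd i = 0)"
    if off: "\<forall>i j. i \<noteq> j \<longrightarrow> X i j = 0" and xB: "(\<lambda>i. X i i) \<in> B" for X
  proof -
    define x where "x = (\<lambda>i. X i i)"
    have xB': "x \<in> B" using xB unfolding x_def .
    have st1: "mat_mult Qi (mat_add X P) = (\<lambda>i l. Qi i l * x l + mat_mult Qi P i l)"
    proof (intro ext)
      fix i l
      have e1: "(\<lambda>m. Qi i m * X m l) = (\<lambda>m. if m = l then Qi i l * x l else 0)"
        using off unfolding x_def by auto
      have s1: "(\<lambda>m. Qi i m * X m l) summable_on UNIV" unfolding e1 by (rule single_pt_summable)
      have s2': "(\<lambda>m. Qi i m * P m l) summable_on UNIV"
        by (rule cprod_summable[OF row_sq[OF Qi s0] col_sq[OF P s0]])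
      have "mat_mult Qi (mat_add X P) i l = (\<Sum>\<^sub>\<infinity>m. Qi i m * X m l + Qi i m * P m l)"
        unfolding mat_mult_def mat_add_def by (simp add: algebra_simps)
      also have "\<dots> = (\<Sum>\<^sub>\<infinity>m. Qi i m * X m l) + (\<Sum>\<^sub>\<infinity>m. Qi i m * P m l)"
        by (rule infsum_add[OF s1 s2'])
      also have "\<dots> = Qi i l * x l + mat_mult Qi P i l"
        unfolding e1 infsum_single_pt mat_mult_def by simp
      finally show "mat_mult Qi (mat_add X P) i l = Qi i l * x l + mat_mult Qi P i l" .
    qed
    have st2: "mat_mult (mat_mult Qi (mat_add X P)) Q i i = T x i + mat_mult (mat_mult Qi P) Q i i" for i
    proof -
      have s1: "(\<lambda>l. Qi i l * x l * Q l i) summable_on UNIV" using Tsum[OF xB'] .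
      have s2': "(\<lambda>l. mat_mult Qi P i l * Q l i) summable_on UNIV"
        by (rule cprod_summable[OF row_sq[OF QiP s0] col_sq[OF Q s0]])
      have "mat_mult (mat_mult Qi (mat_add X P)) Q i i
          = (\<Sum>\<^sub>\<infinity>l. Qi i l * x l * Q l i + mat_mult Qi P i l * Q l i)"
        unfolding st1 by (simp add: mat_mult_def algebra_simps)
      also have "\<dots> = T x i + mat_mult (mat_mult Qi P) Q i i"
        unfolding T_def by (subst infsum_add[OF s1 s2']) (simp add: mat_mult_def)
      finally show ?thesis .
    qed
    have st3: "mat_add (mat_mult (mat_mult Qi (mat_add X P)) Q) P' i i = T x i + Dd i" for i
    proof -
      have "mat_add (mat_mult (mat_mult Qi (mat_add X P)) Q) P' i i
          = mat_mult (mat_mult Qi (mat_add X P)) Q i i + P' i i" by (simp only: mat_add_def)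
      also have "\<dots> = T x i + Dd i" by (simp only: st2 Dd_def add.assoc)
      finally show ?thesis .
    qed
    show ?thesis unfolding main_diag_zero x_def[symmetric] st3 ..
  qed
  have uniq_bound: "nB x \<le> 2 * nB Dd" if xB: "x \<in> B" and eq: "\<forall>i. T x i + Dd i = 0" for x
  proof -
    have xeq: "x = (\<lambda>i. (- Dd i) + (- (T x i - x i)))" using eq by (auto simp: fun_eq_iff algebra_simps)
    have "nB x \<le> nB (\<lambda>i. - Dd i) + nB (\<lambda>i. - (T x i - x i))"
      by (subst xeq) (intro nB_add neg_in DdB TB[OF xB, THEN conjunct1])
    also have "\<dots> \<le> nB Dd + \<epsilon> * nB x"
      using nB_neg[OF DdB] nB_neg[OF TB[OF xB, THEN conjunct1]] TB[OF xB] by simp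
    finally have "nB x \<le> nB Dd + \<epsilon> * nB x" .
    then have "(1 - \<epsilon>) * nB x \<le> nB Dd" by (simp add: algebra_simps)
    moreover have "(1/2) * nB x \<le> (1 - \<epsilon>) * nB x" using eps nB_nonneg[OF xB]
      by (intro mult_right_mono) auto
    ultimately show ?thesis by simp
  qed
  define R where "R x = (\<lambda>i. x i - T x i)" for x
  have RB: "R x \<in> B" if "x \<in> B" for x
    using neg_in[OF TB[OF that, THEN conjunct1]] unfolding R_def by simp
  have Rlin: "(\<lambda>i. R x i - R y i) = R (\<lambda>i. x i - y i)" if "x \<in> B" "y \<in> B" for x y
    unfolding R_def Tlin[OF that] by (auto simp: algebra_simps)
  have Rn: "nB (R x) \<le> \<epsilon> * nB x" if "x \<in> B" for x
    using nB_neg[OF TB[OF that, THEN conjunct1]] TB[OF that] unfolding R_def by simp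
  obtain z where zB: "z \<in> B" and zeq: "\<forall>i. z i - R z i = - Dd i"
    using contraction[OF RB Rlin Rn eps(1) eps_lt neg_in[OF DdB]] by blast
  have zsol: "\<forall>i. T z i + Dd i = 0" using zeq unfolding R_def by simp
  define X0 where "X0 = (\<lambda>i j. if i = j then z i else 0)"
  have X0off: "\<forall>i j. i \<noteq> j \<longrightarrow> X0 i j = 0" unfolding X0_def by simp
  have X0d: "(\<lambda>i. X0 i i) = z" unfolding X0_def by simp
  have X0M: "X0 \<in> M0_inf B nB" unfolding M0_inf_iff using X0off X0d zB by simp
  have X0sol: "main_diag (mat_add (mat_mult (mat_mult Qi (mat_add X0 P)) Q) P') = (\<lambda>_ _. 0)"
    using key[OF X0off] X0d zB zsol by simp
  have uniq: "X = X0" if XM: "X \<in> M0_inf B nB"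
      and Xs: "main_diag (mat_add (mat_mult (mat_mult Qi (mat_add X P)) Q) P') = (\<lambda>_ _. 0)" for X
  proof -
    have off: "\<forall>i j. i \<noteq> j \<longrightarrow> X i j = 0" and xB: "(\<lambda>i. X i i) \<in> B"
      using XM unfolding M0_inf_iff by auto
    have xsol: "\<forall>i. T (\<lambda>i. X i i) i + Dd i = 0" using key[OF off xB] Xs by simp
    define w where "w = (\<lambda>i. X i i - z i)"
    have wB: "w \<in> B" unfolding w_def by (intro diff_in xB zB)
    have Tw: "T w = (\<lambda>_. 0)" unfolding w_def Tlin[OF xB zB]
    proof (rule ext)
      fix i
      have a: "T (\<lambda>i. X i i) i = - Dd i" using xsol by (simp add: eq_neg_iff_add_eq_0)
      have b: "T z i = - Dd i" using zsol by (simp add: eq_neg_iff_add_eq_0)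
      show "T (\<lambda>i. X i i) i - T z i = 0" using a b by simp
    qed
    have "nB w = nB (\<lambda>i. T w i - w i)" using nB_neg[OF wB] unfolding Tw by simp
    also have "\<dots> \<le> \<epsilon> * nB w" using TB[OF wB] by simp
    finally have "nB w \<le> \<epsilon> * nB w" .
    moreover have "\<epsilon> * nB w \<le> (1/2) * nB w" using eps nB_nonneg[OF wB] by (intro mult_right_mono) auto
    ultimately have "nB w = 0" using nB_nonneg[OF wB] by linarith
    then have "w = (\<lambda>_. 0)" using nB_eq0[OF wB] by simp
    then have "\<forall>i. X i i = z i" unfolding w_def by (simp add: fun_eq_iff)
    then show "X = X0" unfolding X0_def using off by (auto simp: fun_eq_iff)
  qed
  have bound: "mnorm nB \<alpha>0 X \<le> 2 * (mnorm nB \<alpha>0 (mat_mult (mat_mult Qi P) Q) + mnorm nB \<alpha>0 P')"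
    if XM: "X \<in> M0_inf B nB"
      and Xs: "main_diag (mat_add (mat_mult (mat_mult Qi (mat_add X P)) Q) P') = (\<lambda>_ _. 0)" for X
  proof -
    have off: "\<forall>i j. i \<noteq> j \<longrightarrow> X i j = 0" and xB: "(\<lambda>i. X i i) \<in> B"
      using XM unfolding M0_inf_iff by auto
    have xsol: "\<forall>i. T (\<lambda>i. X i i) i + Dd i = 0" using key[OF off xB] Xs by simp
    have "mnorm nB \<alpha>0 X = nB (\<lambda>i. X i i)" using diagonal_M_s(2)[OF off xB] .
    also have "\<dots> \<le> 2 * nB Dd" using uniq_bound[OF xB xsol] .
    finally show ?thesis using Ddn by simp
  qed
  show ?thesis
  proof (intro conjI allI impI)
    show "\<exists>!X. X \<in> M0_inf B nB \<and>
            main_diag (mat_add (mat_mult (mat_mult Qi (mat_add X P)) Q) P') = (\<lambda>_ _. 0)"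
    proof (rule ex1I[of _ X0])
      show "X0 \<in> M0_inf B nB \<and>
            main_diag (mat_add (mat_mult (mat_mult Qi (mat_add X0 P)) Q) P') = (\<lambda>_ _. 0)"
        using X0M X0sol by (rule conjI)
      fix X assume "X \<in> M0_inf B nB \<and>
            main_diag (mat_add (mat_mult (mat_mult Qi (mat_add X P)) Q) P') = (\<lambda>_ _. 0)"
      then show "X = X0" by (elim conjE) (rule uniq)
    qed
  next
    fix X assume "X \<in> M0_inf B nB \<and>
            main_diag (mat_add (mat_mult (mat_mult Qi (mat_add X P)) Q) P') = (\<lambda>_ _. 0)"
    then show "mnorm nB \<alpha>0 X \<le> 2 * (mnorm nB \<alpha>0 (mat_mult (mat_mult Qi P) Q) + mnorm nB \<alpha>0 P')"
      by (elim conjE) (rule bound)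
  qed
qed

end
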